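(* Let $P$ be a polygonal knot embedded in $\mathbb{R}^3$ consisting of $n$ line segments. If $w(K)$ is the writhe of one orthogonal planar projection $K$ of $P$, then for every orthogonal planar projection $K'$ of $P$, the number $c$ of crossings of $K'$ satisfies $c \ge \frac{1}{16}\left(|w(K)| - 3n\right)$.
   Context: Orthogonal planar projections are taken in general-position directions, so that they are knot diagrams with finitely many transverse double-point crossings carrying over/under information. The writhe $w(K)$ of a diagram is computed by orienting it and assigning to each crossing the sign $+1$ if the oriented undercrossing strand is oriented by the right-hand rule relative to the oriented overcrossing strand and $-1$ otherwise, then summing over all crossings; it is independent of the chosen orientation. *)

theory Defs
  imports "HOL-Analysis.Analysis"
begin

definition seg :: "(nat \<Rightarrow> real^3) \<Rightarrow> nat \<Rightarrow> nat \<Rightarrow> (real^3) set" where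
  "seg v n i = closed_segment (v i) (v (Suc i mod n))"

definition edge_dir :: "(nat \<Rightarrow> real^3) \<Rightarrow> nat \<Rightarrow> nat \<Rightarrow> real^3" where
  "edge_dir v n i = v (Suc i mod n) - v i"

definition adjacent :: "nat \<Rightarrow> nat \<Rightarrow> nat \<Rightarrow> bool" where
  "adjacent n i j \<longleftrightarrow> j = Suc i mod n \<or> i = Suc j mod n"

definition polygonal_knot :: "(nat \<Rightarrow> real^3) \<Rightarrow> nat \<Rightarrow> bool" where
  "polygonal_knot v n \<longleftrightarrow> n \<ge> 3 \<and>
     (\<forall>i<n. v i \<noteq> v (Suc i mod n)) \<and>
     (\<forall>i<n. \<forall>j<n. j = Suc i mod n \<longrightarrow> seg v n i \<inter> seg v n j = {v j}) \<and>
     (\<forall>i<n. \<forall>j<n. i \<noteq> j \<and> \<not> adjacent n i j \<longrightarrow> seg v n i \<inter> seg v n j = {})"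

definition proj :: "real^3 \<Rightarrow> real^3 \<Rightarrow> real^3" where
  "proj u x = x - ((x \<bullet> u) / (u \<bullet> u)) *\<^sub>R u"

definition pseg :: "real^3 \<Rightarrow> (nat \<Rightarrow> real^3) \<Rightarrow> nat \<Rightarrow> nat \<Rightarrow> (real^3) set" where
  "pseg u v n i = proj u ` seg v n i"

text \<open>General position of the projection direction: the projection is a knot diagram
  (no edge projects to a point, adjacent edges' images meet only in the image of the common
  vertex, non-adjacent images meet in at most one point which is not the image of a vertex
  and where they cross transversally, and there are no triple points).\<close>
definition general_position :: "(nat \<Rightarrow> real^3) \<Rightarrow> nat \<Rightarrow> real^3 \<Rightarrow> bool" where
  "general_position v n u \<longleftrightarrow> u \<noteq> 0 \<and>
     (\<forall>i<n. proj u (edge_dir v n i) \<noteq> 0) \<and>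
     (\<forall>i<n. \<forall>j<n. j = Suc i mod n \<longrightarrow> pseg u v n i \<inter> pseg u v n j = {proj u (v j)}) \<and>
     (\<forall>i<n. \<forall>j<n. i \<noteq> j \<and> \<not> adjacent n i j \<longrightarrow>
        finite (pseg u v n i \<inter> pseg u v n j) \<and> card (pseg u v n i \<inter> pseg u v n j) \<le> 1 \<and>
        (\<forall>k<n. proj u (v k) \<notin> pseg u v n i \<inter> pseg u v n j) \<and>
        (pseg u v n i \<inter> pseg u v n j \<noteq> {} \<longrightarrow>
           cross3 (edge_dir v n i) (edge_dir v n j) \<bullet> u \<noteq> 0)) \<and>
     (\<forall>i<n. \<forall>j<n. \<forall>k<n. i \<noteq> j \<and> j \<noteq> k \<and> i \<noteq> k \<longrightarrow>
        pseg u v n i \<inter> pseg u v n j \<inter> pseg u v n k = {})"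

definition crossings :: "(nat \<Rightarrow> real^3) \<Rightarrow> nat \<Rightarrow> real^3 \<Rightarrow> (nat \<times> nat) set" where
  "crossings v n u = {(i, j). i < j \<and> j < n \<and> \<not> adjacent n i j \<and>
                             pseg u v n i \<inter> pseg u v n j \<noteq> {}}"

text \<open>Height of edge i over edge j at their crossing, measured along u (positive: edge i
  is the over-strand, the viewer being at the far end of u).\<close>
definition height :: "(nat \<Rightarrow> real^3) \<Rightarrow> nat \<Rightarrow> real^3 \<Rightarrow> nat \<Rightarrow> nat \<Rightarrow> real" where
  "height v n u i j = (SOME t. \<exists>p\<in>seg v n i. \<exists>q\<in>seg v n j. p - q = t *\<^sub>R u)"

text \<open>Right-hand-rule sign: +1 iff (over direction) x (under direction) points toward
  the viewer. Independent of the side of viewing (u vs -u).\<close>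
definition crossing_sign :: "(nat \<Rightarrow> real^3) \<Rightarrow> nat \<Rightarrow> real^3 \<Rightarrow> nat \<Rightarrow> nat \<Rightarrow> real" where
  "crossing_sign v n u i j =
     sgn (height v n u i j * (cross3 (edge_dir v n i) (edge_dir v n j) \<bullet> u))"

definition writhe :: "(nat \<Rightarrow> real^3) \<Rightarrow> nat \<Rightarrow> real^3 \<Rightarrow> real" where
  "writhe v n u = (\<Sum>(i, j)\<in>crossings v n u. crossing_sign v n u i j)"

end

theory Submission
  imports Defs
begin

definition om :: "real \<Rightarrow> real \<Rightarrow> real" where
  "om x y = (if x \<ge> 0 \<and> y \<ge> 0 then 1 else 0)"

lemma ex_zero_iff:
  fixes y0 y1 :: real and P :: "real \<Rightarrow> bool"
  assumes "y0 \<noteq> 0" "y1 \<noteq> 0"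
  shows "(\<exists>l\<in>{0..1}. (1-l)*y0 + l*y1 = 0 \<and> P ((1-l)*x0 + l*x1))
     \<longleftrightarrow> y0*y1 < 0 \<and> P ((y1*x0 - y0*x1)/(y1 - y0))"
proof
  assume "\<exists>l\<in>{0..1}. (1-l)*y0 + l*y1 = 0 \<and> P ((1-l)*x0 + l*x1)"
  then obtain l where l: "0 \<le> l" "l \<le> 1" "(1-l)*y0 + l*y1 = 0" "P ((1-l)*x0 + l*x1)" by auto
  have "l \<noteq> 0" using l assms by auto
  have "l \<noteq> 1" using l assms by auto
  have ne: "y1 - y0 \<noteq> 0" using l assms by (auto simp: algebra_simps)
  have ll: "l = y0/(y0 - y1)" using l ne by (auto simp: field_simps algebra_simps)
  have ne2: "y0 - y1 \<noteq> 0" using ne by simp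
  have "(1-l)*x0 + l*x1 = (y0*x1 - y1*x0)/(y0 - y1)"
  proof -
    have "1 - l = -y1/(y0-y1)" using ne2 unfolding ll by (simp add: field_simps)
    hence "(1-l)*x0 + l*x1 = (-y1*x0)/(y0-y1) + (y0*x1)/(y0-y1)" unfolding ll by simp
    also have "\<dots> = (y0*x1 - y1*x0)/(y0 - y1)" by (simp add: diff_divide_distrib)
    finally show ?thesis .
  qed
  also have "\<dots> = (y1*x0 - y0*x1)/(y1 - y0)" by (metis minus_diff_eq minus_divide_divide)
  finally have "(1-l)*x0 + l*x1 = (y1*x0 - y0*x1)/(y1 - y0)" .
  moreover have "y0*y1 < 0"
  proof -
    have "(1-l)*y0 = - (l*y1)" using l by simp
    hence "(1-l)*y0*y1 = -(l*y1*y1)" by simp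
    moreover have "l*y1*y1 > 0"
    proof -
      have "l > 0" using \<open>l\<noteq>0\<close> l by simp
      moreover have "y1*y1 > 0" using assms by (auto simp: zero_less_mult_iff)
      ultimately show ?thesis by (simp add: mult.assoc)
    qed
    moreover have "1 - l > 0" using \<open>l\<noteq>1\<close> l by simp
    ultimately have e: "(1-l)*(y0*y1) = -(l*y1*y1)" "l*y1*y1 > 0" "1 - l > 0" by (simp_all add: mult.assoc)
    show ?thesis
    proof (rule ccontr)
      assume "\<not> y0*y1 < 0"
      hence "(1-l)*(y0*y1) \<ge> 0" using e(3) by simp
      thus False using e(1,2) by linarith
    qed
  qed
  ultimately show "y0*y1 < 0 \<and> P ((y1*x0 - y0*x1)/(y1 - y0))" using l by simp
next
  assume a: "y0*y1 < 0 \<and> P ((y1*x0 - y0*x1)/(y1 - y0))"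
  have ne: "y1 - y0 \<noteq> 0" using a by auto
  define l where "l = y0/(y0 - y1)"
  have "0 \<le> l \<and> l \<le> 1"
  proof (cases "y0 > 0")
    case True
    hence "y1 < 0" using a by (auto simp: mult_less_0_iff)
    hence "y0 - y1 > 0" "y0 \<le> y0 - y1" using True by auto
    thus ?thesis unfolding l_def using True by (simp add: divide_le_eq_1)
  next
    case False
    hence "y0 < 0" "y1 > 0" using a by (auto simp: mult_less_0_iff)
    hence "y0 - y1 < 0" "y0 - y1 \<le> y0" by auto
    thus ?thesis unfolding l_def using \<open>y0 < 0\<close> by (simp add: divide_le_eq_1 zero_le_divide_iff)
  qed
  have ne2: "y0 - y1 \<noteq> 0" using ne by simp
  have z: "(1-l)*y0 + l*y1 = 0" using ne2 unfolding l_def by (simp add: field_simps)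
  have "(1-l)*x0 + l*x1 = (y0*x1 - y1*x0)/(y0 - y1)"
  proof -
    have "1 - l = -y1/(y0-y1)" using ne2 unfolding l_def by (simp add: field_simps)
    hence "(1-l)*x0 + l*x1 = (-y1*x0)/(y0-y1) + (y0*x1)/(y0-y1)" unfolding l_def by simp
    also have "\<dots> = (y0*x1 - y1*x0)/(y0 - y1)" by (simp add: diff_divide_distrib)
    finally show ?thesis .
  qed
  also have "(y0*x1 - y1*x0)/(y0 - y1) = (y1*x0 - y0*x1)/(y1 - y0)" by (metis minus_diff_eq minus_divide_divide)
  finally have "(1-l)*x0 + l*x1 = (y1*x0 - y0*x1)/(y1 - y0)" .
  thus "\<exists>l\<in>{0..1}. (1-l)*y0 + l*y1 = 0 \<and> P ((1-l)*x0 + l*x1)" using a z \<open>0 \<le> l \<and> l \<le> 1\<close> by auto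
qed

lemma pathQ_aux:
  fixes x0 y0 x1 y1 :: real
  assumes "x0 \<noteq> 0" "y0 \<noteq> 0" "x1 \<noteq> 0" "y1 \<noteq> 0"
    and nz: "x0*x1 < 0 \<Longrightarrow> y0*y1 < 0 \<Longrightarrow> x0*y1 - x1*y0 \<noteq> 0"
  shows "om x1 y1 - om x0 y0 =
    sgn (y1 - y0) * (if y0*y1 < 0 \<and> (x0*y1 - x1*y0)/(y1 - y0) > 0 then 1 else 0) +
    sgn (x1 - x0) * (if x0*x1 < 0 \<and> (x1*y0 - x0*y1)/(x1 - x0) > 0 then 1 else 0)"
proof -
  have A: "x0 > 0 \<or> x0 < 0" "x1 > 0 \<or> x1 < 0" "y0 > 0 \<or> y0 < 0" "y1 > 0 \<or> y1 < 0"
    using assms by auto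
  show ?thesis
    using A nz
    apply (elim disjE)
    apply (auto simp: om_def zero_less_divide_iff mult_less_0_iff zero_less_mult_iff sgn_if)
    apply (smt (verit) mult_pos_pos mult_neg_neg mult_pos_neg mult_neg_pos)+
    done
qed

lemma pathQ:
  fixes x0 y0 x1 y1 :: real
  assumes "x0 \<noteq> 0" "y0 \<noteq> 0" "x1 \<noteq> 0" "y1 \<noteq> 0"
    and nz: "\<forall>l\<in>{0..1}. \<not> ((1-l)*x0 + l*x1 = 0 \<and> (1-l)*y0 + l*y1 = 0)"
  shows "om x1 y1 - om x0 y0 =
    sgn (y1 - y0) * (if \<exists>l\<in>{0..1}. (1-l)*y0 + l*y1 = 0 \<and> (1-l)*x0 + l*x1 > 0 then 1 else 0) +
    sgn (x1 - x0) * (if \<exists>l\<in>{0..1}. (1-l)*x0 + l*x1 = 0 \<and> (1-l)*y0 + l*y1 > 0 then 1 else 0)"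
proof -
  have e1: "(\<exists>l\<in>{0..1}. (1-l)*y0 + l*y1 = 0 \<and> (1-l)*x0 + l*x1 > 0) \<longleftrightarrow>
      y0*y1 < 0 \<and> (y1*x0 - y0*x1)/(y1 - y0) > 0"
    using ex_zero_iff[of y0 y1 "\<lambda>x. x > 0" x0 x1] assms by simp
  have e2: "(\<exists>l\<in>{0..1}. (1-l)*x0 + l*x1 = 0 \<and> (1-l)*y0 + l*y1 > 0) \<longleftrightarrow>
      x0*x1 < 0 \<and> (x1*y0 - x0*y1)/(x1 - x0) > 0"
    using ex_zero_iff[of x0 x1 "\<lambda>x. x > 0" y0 y1] assms by simp
  have e3: "(\<exists>l\<in>{0..1}. (1-l)*x0 + l*x1 = 0 \<and> (1-l)*y0 + l*y1 = 0) \<longleftrightarrow>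
      x0*x1 < 0 \<and> (x1*y0 - x0*y1)/(x1 - x0) = 0"
    using ex_zero_iff[of x0 x1 "\<lambda>x. x = 0" y0 y1] assms(1,3) by blast
  have nz': "x0*x1 < 0 \<Longrightarrow> y0*y1 < 0 \<Longrightarrow> x0*y1 - x1*y0 \<noteq> 0"
  proof
    assume "x0*x1 < 0" "y0*y1 < 0" "x0*y1 - x1*y0 = 0"
    hence "(x1*y0 - x0*y1)/(x1 - x0) = 0" by simp
    thus False using e3 nz \<open>x0*x1 < 0\<close> by blast
  qed
  have eq: "y1*x0 - y0*x1 = x0*y1 - x1*y0" by simp
  show ?thesis unfolding e1 e2 eq by (rule pathQ_aux[OF assms(1-4) nz'])
qed

definition lin :: "real \<Rightarrow> real \<Rightarrow> real \<Rightarrow> real \<Rightarrow> real \<Rightarrow> real" where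
  "lin a b c s t = a + s*b - t*c"

definition Tf :: "real \<times> real \<times> real \<Rightarrow> real \<times> real \<times> real \<Rightarrow> real" where
  "Tf p q = (case p of (px,py,pz) \<Rightarrow> case q of (qx,qy,qz) \<Rightarrow>
     (if (qz \<ge> 0) = (pz \<ge> 0) then 0 else
       (if qz \<ge> 0 then 1 else -1) * om ((qz*px - pz*qx)/(qz - pz)) ((qz*py - pz*qy)/(qz - pz))))"

lemma Tf_anti: "Tf q p = - Tf p q"
proof -
  obtain px py pz where p: "p = (px,py,pz)" by (cases p) auto
  obtain qx qy qz where q: "q = (qx,qy,qz)" by (cases q) auto
  have 1: "(pz*qx - qz*px)/(pz - qz) = (qz*px - pz*qx)/(qz - pz)"
    by (metis minus_diff_eq minus_divide_divide)
  have 2: "(pz*qy - qz*py)/(pz - qz) = (qz*py - pz*qy)/(qz - pz)"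
    by (metis minus_diff_eq minus_divide_divide)
  show ?thesis unfolding p q Tf_def using 1 2 by auto
qed

lemma Tf_same: "(snd (snd p) \<ge> 0) = (snd (snd q) \<ge> 0) \<Longrightarrow> Tf p q = 0"
  by (cases p; cases q) (auto simp: Tf_def)

definition PPc :: "real \<Rightarrow> real \<Rightarrow> real \<Rightarrow> real \<Rightarrow> real \<Rightarrow> real \<Rightarrow> real \<Rightarrow> real \<Rightarrow> real \<Rightarrow> bool" where
  "PPc a1 a2 a3 b1 b2 b3 c1 c2 c3 \<longleftrightarrow>
    (Tf (lin a1 b1 c1 0 0, lin a2 b2 c2 0 0, lin a3 b3 c3 0 0) (lin a1 b1 c1 1 0, lin a2 b2 c2 1 0, lin a3 b3 c3 1 0)
   + Tf (lin a1 b1 c1 1 0, lin a2 b2 c2 1 0, lin a3 b3 c3 1 0) (lin a1 b1 c1 1 1, lin a2 b2 c2 1 1, lin a3 b3 c3 1 1)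
   + Tf (lin a1 b1 c1 1 1, lin a2 b2 c2 1 1, lin a3 b3 c3 1 1) (lin a1 b1 c1 0 1, lin a2 b2 c2 0 1, lin a3 b3 c3 0 1)
   + Tf (lin a1 b1 c1 0 1, lin a2 b2 c2 0 1, lin a3 b3 c3 0 1) (lin a1 b1 c1 0 0, lin a2 b2 c2 0 0, lin a3 b3 c3 0 0)
   = (if \<exists>s\<in>{0..1}. \<exists>t\<in>{0..1}. lin a1 b1 c1 s t = 0 \<and> lin a3 b3 c3 s t = 0 \<and> lin a2 b2 c2 s t > 0
        then sgn (b3*c1 - b1*c3) else 0)
   - (if \<exists>s\<in>{0..1}. \<exists>t\<in>{0..1}. lin a2 b2 c2 s t = 0 \<and> lin a3 b3 c3 s t = 0 \<and> lin a1 b1 c1 s t > 0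
        then sgn (b2*c3 - b3*c2) else 0))"

definition PPh :: "real \<Rightarrow> real \<Rightarrow> real \<Rightarrow> real \<Rightarrow> real \<Rightarrow> real \<Rightarrow> real \<Rightarrow> real \<Rightarrow> real \<Rightarrow> bool" where
  "PPh a1 a2 a3 b1 b2 b3 c1 c2 c3 \<longleftrightarrow>
    (\<forall>s\<in>{0..1}. \<forall>t\<in>{0..1}. \<not> (lin a1 b1 c1 s t = 0 \<and> lin a2 b2 c2 s t = 0 \<and> lin a3 b3 c3 s t = 0)) \<and>
    ((\<exists>s\<in>{0..1}. \<exists>t\<in>{0..1}. lin a2 b2 c2 s t = 0 \<and> lin a3 b3 c3 s t = 0) \<longrightarrow> b2*c3 - b3*c2 \<noteq> 0) \<and>
    ((\<exists>s\<in>{0..1}. \<exists>t\<in>{0..1}. lin a1 b1 c1 s t = 0 \<and> lin a3 b3 c3 s t = 0) \<longrightarrow> b3*c1 - b1*c3 \<noteq> 0) \<and>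
    (\<forall>s\<in>{0..1}. \<forall>t\<in>{0..1}. (s = 0 \<or> s = 1 \<or> t = 0 \<or> t = 1) \<longrightarrow>
        \<not> (lin a2 b2 c2 s t = 0 \<and> lin a3 b3 c3 s t = 0) \<and> \<not> (lin a1 b1 c1 s t = 0 \<and> lin a3 b3 c3 s t = 0))"

lemma lin_comb: "lin a b c ((1-l)* s1 + l* s2) ((1-l)*t1 + l*t2) = (1-l)*lin a b c s1 t1 + l*lin a b c s2 t2"
  by (simp add: lin_def algebra_simps)

lemma Tf_up: "pz < 0 \<Longrightarrow> 0 \<le> qz \<Longrightarrow>
  Tf (px,py,pz) (qx,qy,qz) = om ((qz*px - pz*qx)/(qz - pz)) ((qz*py - pz*qy)/(qz - pz))"
  by (simp add: Tf_def)

lemma Tf_dn: "0 \<le> pz \<Longrightarrow> qz < 0 \<Longrightarrow>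
  Tf (px,py,pz) (qx,qy,qz) = - om ((qz*px - pz*qx)/(qz - pz)) ((qz*py - pz*qy)/(qz - pz))"
  by (simp add: Tf_def)

lemma Tf_0: "(0 \<le> pz) = (0 \<le> qz) \<Longrightarrow> Tf (px,py,pz) (qx,qy,qz) = 0"
  by (simp add: Tf_def)

lemma PPc_trivial:
  assumes "\<not> (\<exists>s\<in>{0..1}. \<exists>t\<in>{0..1}. lin a1 b1 c1 s t = 0 \<and> lin a3 b3 c3 s t = 0 \<and> lin a2 b2 c2 s t > 0)"
    and "\<not> (\<exists>s\<in>{0..1}. \<exists>t\<in>{0..1}. lin a2 b2 c2 s t = 0 \<and> lin a3 b3 c3 s t = 0 \<and> lin a1 b1 c1 s t > 0)"
    and "(0 \<le> lin a3 b3 c3 0 0) = (0 \<le> lin a3 b3 c3 1 0)"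
    and "(0 \<le> lin a3 b3 c3 1 1) = (0 \<le> lin a3 b3 c3 1 0)"
    and "(0 \<le> lin a3 b3 c3 0 1) = (0 \<le> lin a3 b3 c3 1 0)"
  shows "PPc a1 a2 a3 b1 b2 b3 c1 c2 c3"
  unfolding PPc_def if_not_P[OF assms(1)] if_not_P[OF assms(2)] using assms(3-5) by (simp add: Tf_0)

lemma idA: "b3 > 0 \<Longrightarrow> ((a3+b3)*a - a3*(a+b))/((a3+b3) - a3) = lin a b c (-a3/b3) 0"
  by (simp add: lin_def field_simps)
lemma idC: "c3 \<noteq> 0 \<Longrightarrow> ((a3+b3-c3)*(a+b) - (a3+b3)*(a+b-c))/((a3+b3-c3) - (a3+b3)) = lin a b c 1 ((a3+b3)/c3)"
  by (simp add: lin_def field_simps)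
lemma idA': "b3 > 0 \<Longrightarrow> ((a3-c3)*(a+b-c) - (a3+b3-c3)*(a-c))/((a3-c3) - (a3+b3-c3)) = lin a b c ((c3-a3)/b3) 1"
  by (simp add: lin_def field_simps)
lemma idB': "c3 \<noteq> 0 \<Longrightarrow> (a3*(a-c) - (a3-c3)*a)/(a3 - (a3-c3)) = lin a b c 0 (a3/c3)"
  by (simp add: lin_def field_simps)

lemma core:
  assumes b3: "b3 > 0" and c3: "c3 \<le> 0" and H: "PPh a1 a2 a3 b1 b2 b3 c1 c2 c3"
  shows "PPc a1 a2 a3 b1 b2 b3 c1 c2 c3"
proof -
  note H0 = H[unfolded PPh_def, THEN conjunct1]
  note H1 = H[unfolded PPh_def, THEN conjunct2, THEN conjunct1]
  note H1' = H[unfolded PPh_def, THEN conjunct2, THEN conjunct2, THEN conjunct1]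
  note H2 = H[unfolded PPh_def, THEN conjunct2, THEN conjunct2, THEN conjunct2]
  have mono: "lin a3 b3 c3 s t \<ge> a3" "lin a3 b3 c3 s t \<le> a3 + b3 - c3"
    if "s\<in>{0..1}" "t\<in>{0..1}" for s t
  proof -
    have "s*b3 \<ge> 0" "s*b3 \<le> b3" using that b3 by (auto simp: mult_left_le_one_le)
    moreover have "t*c3 \<le> 0" "t*c3 \<ge> c3" using that c3
      by (auto simp: mult_nonneg_nonpos) (metis mult_left_le_one_le mult_le_cancel_right mult_minus_left neg_0_le_iff_le mult.commute minus_mult_left order.trans mult_1)
    ultimately show "lin a3 b3 c3 s t \<ge> a3" "lin a3 b3 c3 s t \<le> a3 + b3 - c3" by (auto simp: lin_def)
  qed
  consider (pos) "a3 > 0" | (neg) "a3 + b3 - c3 < 0" | (zero) "a3 = 0" | (main) "a3 < 0" "a3 + b3 - c3 \<ge> 0"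
    by linarith
  then show ?thesis
  proof cases
    case pos
    have nz: "\<forall>s\<in>{0..1}. \<forall>t\<in>{0..1}. lin a3 b3 c3 s t \<noteq> 0" using mono pos by force
    have c: "lin a3 b3 c3 0 0 > 0" "lin a3 b3 c3 1 0 > 0" "lin a3 b3 c3 0 1 > 0" "lin a3 b3 c3 1 1 > 0"
      using mono[of 0 0] mono[of 1 0] mono[of 0 1] mono[of 1 1] pos by auto
    show ?thesis
      by (rule PPc_trivial) (use nz c in auto)
  next
    case neg
    have nz: "\<forall>s\<in>{0..1}. \<forall>t\<in>{0..1}. lin a3 b3 c3 s t \<noteq> 0" using mono neg by force
    have c: "lin a3 b3 c3 0 0 < 0" "lin a3 b3 c3 1 0 < 0" "lin a3 b3 c3 0 1 < 0" "lin a3 b3 c3 1 1 < 0"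
      using mono[of 0 0] mono[of 1 0] mono[of 0 1] mono[of 1 1] neg by auto
    show ?thesis
      by (rule PPc_trivial) (use nz c in auto)
  next
    case zero
    have s0: "s = 0" if "s\<in>{0..1}" "t\<in>{0..1}" "lin a3 b3 c3 s t = 0" for s t
    proof -
      have "s*b3 = t*c3" using that zero by (simp add: lin_def)
      moreover have "t*c3 \<le> 0" using that c3 by (simp add: mult_nonneg_nonpos)
      moreover have "s*b3 \<ge> 0" using that b3 by simp
      ultimately have "s*b3 = 0" by linarith
      thus ?thesis using b3 by simp
    qed
    have c: "lin a3 b3 c3 0 0 \<ge> 0" "lin a3 b3 c3 1 0 \<ge> 0" "lin a3 b3 c3 0 1 \<ge> 0" "lin a3 b3 c3 1 1 \<ge> 0"
      using mono[of 0 0] mono[of 1 0] mono[of 0 1] mono[of 1 1] zero by auto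
    have n1: "\<not> (\<exists>s\<in>{0..1}. \<exists>t\<in>{0..1}. lin a1 b1 c1 s t = 0 \<and> lin a3 b3 c3 s t = 0 \<and> lin a2 b2 c2 s t > 0)"
      using s0 H2 by blast
    have n2: "\<not> (\<exists>s\<in>{0..1}. \<exists>t\<in>{0..1}. lin a2 b2 c2 s t = 0 \<and> lin a3 b3 c3 s t = 0 \<and> lin a1 b1 c1 s t > 0)"
      using s0 H2 by blast
    show ?thesis
      by (rule PPc_trivial[OF n1 n2]) (use c in auto)
  next
    case main
    define su where "su = (if a3 + b3 \<ge> 0 then -a3/b3 else 1)"
    define tu where "tu = (if a3 + b3 \<ge> 0 then 0 else (a3+b3)/c3)"
    define sd where "sd = (if a3 - c3 < 0 then (c3 - a3)/b3 else 0)"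
    define td where "td = (if a3 - c3 < 0 then 1 else a3/c3)"
    have c3n: "a3 + b3 < 0 \<Longrightarrow> c3 < 0" "a3 - c3 \<ge> 0 \<Longrightarrow> c3 < 0" using main by linarith+
    have rng: "0 \<le> su" "su \<le> 1" "0 \<le> tu" "tu \<le> 1" "0 \<le> sd" "sd \<le> 1" "0 \<le> td" "td \<le> 1"
    proof -
      show "0 \<le> su" "su \<le> 1" unfolding su_def using main b3 by (auto simp: divide_simps)
      show "0 \<le> tu" "tu \<le> 1" unfolding tu_def using main b3 c3n by (auto simp: divide_simps)
      show "0 \<le> sd" "sd \<le> 1" unfolding sd_def using main b3 by (auto simp: divide_simps)
      show "0 \<le> td" "td \<le> 1" unfolding td_def using main b3 c3n by (auto simp: divide_simps)
    qed
    have zu: "lin a3 b3 c3 su tu = 0" unfolding su_def tu_def lin_def using b3 c3n by (auto simp: field_simps)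
    have zd: "lin a3 b3 c3 sd td = 0" unfolding sd_def td_def lin_def using b3 c3n by (auto simp: field_simps)
    have bu: "tu = 0 \<or> su = 1" unfolding su_def tu_def by auto
    have bd: "td = 1 \<or> sd = 0" unfolding sd_def td_def by auto
    have sz: "s = (t*c3 - a3)/b3" if "lin a3 b3 c3 s t = 0" for s t
      using that b3 by (simp add: lin_def field_simps)
    have tbnd: "tu \<le> t \<and> t \<le> td" if "s\<in>{0..1}" "t\<in>{0..1}" "lin a3 b3 c3 s t = 0" for s t
    proof -
      have e: "s*b3 = t*c3 - a3" using that by (simp add: lin_def algebra_simps)
      have "tu \<le> t"
      proof (cases "a3 + b3 \<ge> 0")
        case True thus ?thesis using that unfolding tu_def by simp
      next
        case False
        hence "c3 < 0" using c3n by simp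
        have "s*b3 \<le> b3" using that b3 by (simp add: mult_left_le_one_le)
        hence "t*c3 \<le> a3 + b3" using e by simp
        thus ?thesis unfolding tu_def using False \<open>c3 < 0\<close> by (simp add: divide_le_eq)
      qed
      moreover have "t \<le> td"
      proof (cases "a3 - c3 < 0")
        case True thus ?thesis using that unfolding td_def by simp
      next
        case False
        hence "c3 < 0" using c3n by simp
        have "s*b3 \<ge> 0" using that b3 by simp
        hence "t*c3 \<ge> a3" using e by simp
        thus ?thesis unfolding td_def using False \<open>c3 < 0\<close> by (simp add: le_divide_eq)
      qed
      ultimately show ?thesis by simp
    qed
    have tle: "tu \<le> td" using tbnd[of su tu] rng zu by auto
    define xu where "xu = lin a1 b1 c1 su tu"
    define yu where "yu = lin a2 b2 c2 su tu"
    define xd where "xd = lin a1 b1 c1 sd td"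
    define yd where "yd = lin a2 b2 c2 sd td"
    have EX: "(\<exists>s\<in>{0..1}. \<exists>t\<in>{0..1}. lin a3 b3 c3 s t = 0 \<and> Q (lin a1 b1 c1 s t) (lin a2 b2 c2 s t))
      \<longleftrightarrow> (\<exists>l\<in>{0..1}. Q ((1-l)*xd + l*xu) ((1-l)*yd + l*yu))" for Q
    proof
      assume "\<exists>s\<in>{0..1}. \<exists>t\<in>{0..1}. lin a3 b3 c3 s t = 0 \<and> Q (lin a1 b1 c1 s t) (lin a2 b2 c2 s t)"
      then obtain s t where st: "s\<in>{0..1}" "t\<in>{0..1}" "lin a3 b3 c3 s t = 0" "Q (lin a1 b1 c1 s t) (lin a2 b2 c2 s t)"
        by blast
      have tb: "tu \<le> t" "t \<le> td" using tbnd[OF st(1-3)] by auto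
      define l where "l = (if td = tu then 0 else (td - t)/(td - tu))"
      have l01: "l \<in> {0..1}" unfolding l_def using tb tle by (auto simp: divide_simps)
      have tl: "t = (1-l)*td + l*tu"
      proof (cases "td = tu")
        case True thus ?thesis using tb unfolding l_def by simp
      next
        case False
        hence "td - tu \<noteq> 0" by simp
        hence "l*(td - tu) = td - t" unfolding l_def using False by simp
        moreover have "(1-l)*td + l*tu = td - l*(td-tu)" by (simp add: algebra_simps)
        ultimately show ?thesis by simp
      qed
      have e1: "s*b3 = t*c3 - a3" "sd*b3 = td*c3 - a3" "su*b3 = tu*c3 - a3"
        using st(3) zd zu by (simp_all add: lin_def algebra_simps)
      have "b3*((1-l)* sd + l* su) = (1-l)*(sd*b3) + l*(su*b3)" by (simp add: algebra_simps)
      also have "\<dots> = ((1-l)*td + l*tu)*c3 - a3" unfolding e1 by (simp add: algebra_simps)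
      also have "\<dots> = s*b3" using e1(1) tl by simp
      finally have sl: "s = (1-l)* sd + l* su" using b3 by simp
      have "Q ((1-l)*xd + l*xu) ((1-l)*yd + l*yu)"
        using st(4) unfolding xd_def xu_def yd_def yu_def tl sl lin_comb .
      thus "\<exists>l\<in>{0..1}. Q ((1-l)*xd + l*xu) ((1-l)*yd + l*yu)" using l01 by blast
    next
      assume "\<exists>l\<in>{0..1}. Q ((1-l)*xd + l*xu) ((1-l)*yd + l*yu)"
      then obtain l where l: "l\<in>{0..1}" "Q ((1-l)*xd + l*xu) ((1-l)*yd + l*yu)" by blast
      define s where "s = (1-l)* sd + l* su"
      define t where "t = (1-l)*td + l*tu"
      have "s \<in> {0..1}" "t \<in> {0..1}" unfolding s_def t_def using l(1) rng
        by (auto intro!: convex_bound_le add_nonneg_nonneg mult_nonneg_nonneg)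
      moreover have "lin a3 b3 c3 s t = 0" unfolding s_def t_def lin_comb zu zd by simp
      moreover have "Q (lin a1 b1 c1 s t) (lin a2 b2 c2 s t)"
        unfolding s_def t_def lin_comb using l(2) unfolding xd_def xu_def yd_def yu_def .
      ultimately show "\<exists>s\<in>{0..1}. \<exists>t\<in>{0..1}. lin a3 b3 c3 s t = 0 \<and> Q (lin a1 b1 c1 s t) (lin a2 b2 c2 s t)"
        by blast
    qed
    have cor: "(lin a1 b1 c1 0 0, lin a2 b2 c2 0 0, lin a3 b3 c3 0 0) = (a1,a2,a3)"
      "(lin a1 b1 c1 1 0, lin a2 b2 c2 1 0, lin a3 b3 c3 1 0) = (a1+b1,a2+b2,a3+b3)"
      "(lin a1 b1 c1 1 1, lin a2 b2 c2 1 1, lin a3 b3 c3 1 1) = (a1+b1-c1,a2+b2-c2,a3+b3-c3)"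
      "(lin a1 b1 c1 0 1, lin a2 b2 c2 0 1, lin a3 b3 c3 0 1) = (a1-c1,a2-c2,a3-c3)"
      by (simp_all add: lin_def)
    have T1: "Tf (a1,a2,a3) (a1+b1,a2+b2,a3+b3) = (if a3 + b3 \<ge> 0 then om xu yu else 0)"
    proof (cases "a3 + b3 \<ge> 0")
      case True
      have "xu = lin a1 b1 c1 (-a3/b3) 0" "yu = lin a2 b2 c2 (-a3/b3) 0"
        unfolding xu_def yu_def su_def tu_def using True by simp_all
      have "Tf (a1,a2,a3) (a1+b1,a2+b2,a3+b3) = om (((a3+b3)*a1 - a3*(a1+b1))/((a3+b3) - a3)) (((a3+b3)*a2 - a3*(a2+b2))/((a3+b3) - a3))"
        by (rule Tf_up) (use main True in auto)
      also have "\<dots> = om xu yu" unfolding idA[OF b3, where a=a1 and b=b1 and c=c1] idA[OF b3, where a=a2 and b=b2 and c=c2] xu_def yu_def su_def tu_def using True by simp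
      finally show ?thesis using True by simp
    next
      case False thus ?thesis using main by (simp add: Tf_0)
    qed
    have T2: "Tf (a1+b1,a2+b2,a3+b3) (a1+b1-c1,a2+b2-c2,a3+b3-c3) = (if a3 + b3 \<ge> 0 then 0 else om xu yu)"
    proof (cases "a3 + b3 \<ge> 0")
      case False
      have "xu = lin a1 b1 c1 1 ((a3+b3)/c3)" "yu = lin a2 b2 c2 1 ((a3+b3)/c3)"
        unfolding xu_def yu_def su_def tu_def using False by simp_all
      have "c3 \<noteq> 0" using c3n False by simp
      have "Tf (a1+b1,a2+b2,a3+b3) (a1+b1-c1,a2+b2-c2,a3+b3-c3) = om (((a3+b3-c3)*(a1+b1) - (a3+b3)*(a1+b1-c1))/((a3+b3-c3) - (a3+b3))) (((a3+b3-c3)*(a2+b2) - (a3+b3)*(a2+b2-c2))/((a3+b3-c3) - (a3+b3)))"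
        by (rule Tf_up) (use main False in auto)
      also have "\<dots> = om xu yu" unfolding idC[OF \<open>c3 \<noteq> 0\<close>, where a=a1 and b=b1 and c=c1] idC[OF \<open>c3 \<noteq> 0\<close>, where a=a2 and b=b2 and c=c2] xu_def yu_def su_def tu_def using False by simp
      finally show ?thesis using False by simp
    next
      case True thus ?thesis using main by (simp add: Tf_0)
    qed
    have T3: "Tf (a1+b1-c1,a2+b2-c2,a3+b3-c3) (a1-c1,a2-c2,a3-c3) = (if a3 - c3 < 0 then - om xd yd else 0)"
    proof (cases "a3 - c3 < 0")
      case True
      have "xd = lin a1 b1 c1 ((c3-a3)/b3) 1" "yd = lin a2 b2 c2 ((c3-a3)/b3) 1"
        unfolding xd_def yd_def sd_def td_def using True by simp_all
      have "Tf (a1+b1-c1,a2+b2-c2,a3+b3-c3) (a1-c1,a2-c2,a3-c3) = - om (((a3-c3)*(a1+b1-c1) - (a3+b3-c3)*(a1-c1))/((a3-c3) - (a3+b3-c3))) (((a3-c3)*(a2+b2-c2) - (a3+b3-c3)*(a2-c2))/((a3-c3) - (a3+b3-c3)))"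
        by (rule Tf_dn) (use main True in auto)
      also have "\<dots> = - om xd yd" unfolding idA'[OF b3, where a=a1 and b=b1 and c=c1] idA'[OF b3, where a=a2 and b=b2 and c=c2] xd_def yd_def sd_def td_def using True by simp
      finally show ?thesis using True by simp
    next
      case False thus ?thesis using main by (simp add: Tf_0)
    qed
    have T4: "Tf (a1-c1,a2-c2,a3-c3) (a1,a2,a3) = (if a3 - c3 < 0 then 0 else - om xd yd)"
    proof (cases "a3 - c3 < 0")
      case False
      have "xd = lin a1 b1 c1 0 (a3/c3)" "yd = lin a2 b2 c2 0 (a3/c3)"
        unfolding xd_def yd_def sd_def td_def using False by simp_all
      have "c3 \<noteq> 0" using c3n False by simp
      have "Tf (a1-c1,a2-c2,a3-c3) (a1,a2,a3) = - om ((a3*(a1-c1) - (a3-c3)*a1)/(a3 - (a3-c3))) ((a3*(a2-c2) - (a3-c3)*a2)/(a3 - (a3-c3)))"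
        by (rule Tf_dn) (use main False in auto)
      also have "\<dots> = - om xd yd" unfolding idB'[OF \<open>c3 \<noteq> 0\<close>, where a=a1 and b=b1 and c=c1] idB'[OF \<open>c3 \<noteq> 0\<close>, where a=a2 and b=b2 and c=c2] xd_def yd_def sd_def td_def using False by simp
      finally show ?thesis using False by simp
    next
      case True thus ?thesis using main by (simp add: Tf_0)
    qed
    have SS: "Tf (a1,a2,a3) (a1+b1,a2+b2,a3+b3) + Tf (a1+b1,a2+b2,a3+b3) (a1+b1-c1,a2+b2-c2,a3+b3-c3)
      + Tf (a1+b1-c1,a2+b2-c2,a3+b3-c3) (a1-c1,a2-c2,a3-c3) + Tf (a1-c1,a2-c2,a3-c3) (a1,a2,a3)
      = om xu yu - om xd yd"
      unfolding T1 T2 T3 T4 by simp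
    have bdd: "sd \<in> {0..1}" "td \<in> {0..1}" "su \<in> {0..1}" "tu \<in> {0..1}" using rng by auto
    have xyd: "xd \<noteq> 0" "yd \<noteq> 0" using H2 bdd(1,2) bd zd unfolding xd_def yd_def by blast+
    have xyu: "xu \<noteq> 0" "yu \<noteq> 0" using H2 bdd(3,4) bu zu unfolding xu_def yu_def by blast+
    have nz: "\<forall>l\<in>{0..1}. \<not> ((1-l)*xd + l*xu = 0 \<and> (1-l)*yd + l*yu = 0)"
    proof
      fix l :: real assume l: "l \<in> {0..1}"
      show "\<not> ((1-l)*xd + l*xu = 0 \<and> (1-l)*yd + l*yu = 0)"
      proof
        assume "(1-l)*xd + l*xu = 0 \<and> (1-l)*yd + l*yu = 0"
        hence "\<exists>s\<in>{0..1}. \<exists>t\<in>{0..1}. lin a3 b3 c3 s t = 0 \<and> (\<lambda>x y. x = 0 \<and> y = 0) (lin a1 b1 c1 s t) (lin a2 b2 c2 s t)"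
          using EX[of "\<lambda>x y. x = 0 \<and> y = 0"] l by blast
        thus False using H0 by auto
      qed
    qed
    note PQ = pathQ[OF xyd(1,2) xyu(1,2) nz]
    have ex1: "(\<exists>s\<in>{0..1}. \<exists>t\<in>{0..1}. lin a2 b2 c2 s t = 0 \<and> lin a3 b3 c3 s t = 0 \<and> lin a1 b1 c1 s t > 0)
      \<longleftrightarrow> (\<exists>l\<in>{0..1}. (1-l)*yd + l*yu = 0 \<and> (1-l)*xd + l*xu > 0)"
    proof -
      have "(\<exists>s\<in>{0..1}. \<exists>t\<in>{0..1}. lin a2 b2 c2 s t = 0 \<and> lin a3 b3 c3 s t = 0 \<and> lin a1 b1 c1 s t > 0)
        \<longleftrightarrow> (\<exists>s\<in>{0..1}. \<exists>t\<in>{0..1}. lin a3 b3 c3 s t = 0 \<and> (\<lambda>x y. y = 0 \<and> x > 0) (lin a1 b1 c1 s t) (lin a2 b2 c2 s t))"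
        by auto
      also have "\<dots> \<longleftrightarrow> (\<exists>l\<in>{0..1}. (1-l)*yd + l*yu = 0 \<and> (1-l)*xd + l*xu > 0)"
        using EX[of "\<lambda>x y. y = 0 \<and> x > 0"] by simp
      finally show ?thesis .
    qed
    have ex2: "(\<exists>s\<in>{0..1}. \<exists>t\<in>{0..1}. lin a1 b1 c1 s t = 0 \<and> lin a3 b3 c3 s t = 0 \<and> lin a2 b2 c2 s t > 0)
      \<longleftrightarrow> (\<exists>l\<in>{0..1}. (1-l)*xd + l*xu = 0 \<and> (1-l)*yd + l*yu > 0)"
    proof -
      have "(\<exists>s\<in>{0..1}. \<exists>t\<in>{0..1}. lin a1 b1 c1 s t = 0 \<and> lin a3 b3 c3 s t = 0 \<and> lin a2 b2 c2 s t > 0)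
        \<longleftrightarrow> (\<exists>s\<in>{0..1}. \<exists>t\<in>{0..1}. lin a3 b3 c3 s t = 0 \<and> (\<lambda>x y. x = 0 \<and> y > 0) (lin a1 b1 c1 s t) (lin a2 b2 c2 s t))"
        by auto
      also have "\<dots> \<longleftrightarrow> (\<exists>l\<in>{0..1}. (1-l)*xd + l*xu = 0 \<and> (1-l)*yd + l*yu > 0)"
        using EX[of "\<lambda>x y. x = 0 \<and> y > 0"] by simp
      finally show ?thesis .
    qed
    have e2: "sd*b3 = td*c3 - a3" "su*b3 = tu*c3 - a3"
      using zd zu by (simp_all add: lin_def algebra_simps)
    have "b3*(yu - yd) = (su*b3 - sd*b3)*b2 - b3*(tu-td)*c2"
      by (simp add: yu_def yd_def lin_def algebra_simps)
    also have "\<dots> = (tu - td)*(b2*c3 - b3*c2)" unfolding e2 by (simp add: algebra_simps)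
    finally have dy: "b3*(yu - yd) = (tu - td)*(b2*c3 - b3*c2)" .
    have "b3*(xu - xd) = (su*b3 - sd*b3)*b1 - b3*(tu-td)*c1"
      by (simp add: xu_def xd_def lin_def algebra_simps)
    also have "\<dots> = (tu - td)*(b1*c3 - b3*c1)" unfolding e2 by (simp add: algebra_simps)
    finally have dx: "b3*(xu - xd) = (tu - td)*(b1*c3 - b3*c1)" .
    have eqcase: "xu = xd \<and> yu = yd" if "tu = td"
    proof -
      have "su*b3 = sd*b3" using e2 that by simp
      hence "su = sd" using b3 by simp
      thus ?thesis using that unfolding xu_def xd_def yu_def yd_def by simp
    qed
    have sgy: "sgn (yu - yd) = - sgn (b2*c3 - b3*c2)" if "tu < td"
    proof -
      have "sgn (yu - yd) = sgn (b3*(yu - yd))" using b3 by (simp add: sgn_mult)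
      also have "\<dots> = sgn (tu - td) * sgn (b2*c3 - b3*c2)" unfolding dy by (simp add: sgn_mult)
      finally show ?thesis using that by simp
    qed
    have sgx: "sgn (xu - xd) = sgn (b3*c1 - b1*c3)" if "tu < td"
    proof -
      have "sgn (xu - xd) = sgn (b3*(xu - xd))" using b3 by (simp add: sgn_mult)
      also have "\<dots> = sgn (tu - td) * sgn (b1*c3 - b3*c1)" unfolding dx by (simp add: sgn_mult)
      also have "\<dots> = - sgn (b1*c3 - b3*c1)" using that by simp
      also have "\<dots> = sgn (b3*c1 - b1*c3)" by (metis minus_diff_eq sgn_minus)
      finally show ?thesis .
    qed
    have X1: "(\<exists>l\<in>{0..1}. (1-l)*yd + l*yu = 0 \<and> (1-l)*xd + l*xu > 0) \<Longrightarrow> tu < td"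
    proof (rule ccontr)
      assume a: "\<exists>l\<in>{0..1}. (1-l)*yd + l*yu = 0 \<and> (1-l)*xd + l*xu > 0" "\<not> tu < td"
      hence "tu = td" using tle by simp
      hence "yu = yd" using eqcase by simp
      with a(1) have "yd = 0" by (auto simp: algebra_simps)
      thus False using xyd by simp
    qed
    have X2: "(\<exists>l\<in>{0..1}. (1-l)*xd + l*xu = 0 \<and> (1-l)*yd + l*yu > 0) \<Longrightarrow> tu < td"
    proof (rule ccontr)
      assume a: "\<exists>l\<in>{0..1}. (1-l)*xd + l*xu = 0 \<and> (1-l)*yd + l*yu > 0" "\<not> tu < td"
      hence "tu = td" using tle by simp
      hence "xu = xd" using eqcase by simp
      with a(1) have "xd = 0" by (auto simp: algebra_simps)
      thus False using xyd by simp
    qed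
    show ?thesis
      unfolding PPc_def cor SS PQ ex1 ex2
      using X1 X2 sgx sgy by auto

  qed
qed


definition PPh' :: "(real \<Rightarrow> real \<Rightarrow> real) \<Rightarrow> (real \<Rightarrow> real \<Rightarrow> real) \<Rightarrow> (real \<Rightarrow> real \<Rightarrow> real) \<Rightarrow> real \<Rightarrow> real \<Rightarrow> bool" where
  "PPh' F1 F2 F3 J1 J2 \<longleftrightarrow>
    (\<forall>s\<in>{0..1}. \<forall>t\<in>{0..1}. \<not> (F1 s t = 0 \<and> F2 s t = 0 \<and> F3 s t = 0)) \<and>
    ((\<exists>s\<in>{0..1}. \<exists>t\<in>{0..1}. F2 s t = 0 \<and> F3 s t = 0) \<longrightarrow> J1 \<noteq> 0) \<and>
    ((\<exists>s\<in>{0..1}. \<exists>t\<in>{0..1}. F1 s t = 0 \<and> F3 s t = 0) \<longrightarrow> J2 \<noteq> 0) \<and>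
    (\<forall>s\<in>{0..1}. \<forall>t\<in>{0..1}. (s = 0 \<or> s = 1 \<or> t = 0 \<or> t = 1) \<longrightarrow>
        \<not> (F2 s t = 0 \<and> F3 s t = 0) \<and> \<not> (F1 s t = 0 \<and> F3 s t = 0))"

definition PPc' :: "(real \<Rightarrow> real \<Rightarrow> real) \<Rightarrow> (real \<Rightarrow> real \<Rightarrow> real) \<Rightarrow> (real \<Rightarrow> real \<Rightarrow> real) \<Rightarrow> real \<Rightarrow> real \<Rightarrow> bool" where
  "PPc' F1 F2 F3 J1 J2 \<longleftrightarrow>
    (Tf (F1 0 0, F2 0 0, F3 0 0) (F1 1 0, F2 1 0, F3 1 0)
   + Tf (F1 1 0, F2 1 0, F3 1 0) (F1 1 1, F2 1 1, F3 1 1)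
   + Tf (F1 1 1, F2 1 1, F3 1 1) (F1 0 1, F2 0 1, F3 0 1)
   + Tf (F1 0 1, F2 0 1, F3 0 1) (F1 0 0, F2 0 0, F3 0 0)
   = (if \<exists>s\<in>{0..1}. \<exists>t\<in>{0..1}. F1 s t = 0 \<and> F3 s t = 0 \<and> F2 s t > 0 then sgn J2 else 0)
   - (if \<exists>s\<in>{0..1}. \<exists>t\<in>{0..1}. F2 s t = 0 \<and> F3 s t = 0 \<and> F1 s t > 0 then sgn J1 else 0))"

lemma PPh_eq: "PPh a1 a2 a3 b1 b2 b3 c1 c2 c3 \<longleftrightarrow>
   PPh' (lin a1 b1 c1) (lin a2 b2 c2) (lin a3 b3 c3) (b2*c3 - b3*c2) (b3*c1 - b1*c3)"
  unfolding PPh_def PPh'_def by (rule refl)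

lemma PPc_eq: "PPc a1 a2 a3 b1 b2 b3 c1 c2 c3 \<longleftrightarrow>
   PPc' (lin a1 b1 c1) (lin a2 b2 c2) (lin a3 b3 c3) (b2*c3 - b3*c2) (b3*c1 - b1*c3)"
  unfolding PPc_def PPc'_def by (rule refl)

lemma trS:
  assumes h: "PPh' F1 F2 F3 J1 J2"
    and r: "PPh' (\<lambda>s t. F1 (1-s) t) (\<lambda>s t. F2 (1-s) t) (\<lambda>s t. F3 (1-s) t) (-J1) (-J2) \<Longrightarrow> PPc' (\<lambda>s t. F1 (1-s) t) (\<lambda>s t. F2 (1-s) t) (\<lambda>s t. F3 (1-s) t) (-J1) (-J2)"
  shows "PPc' F1 F2 F3 J1 J2"
proof -
  have m: "1 - s \<in> {0..1::real}" if "s \<in> {0..1}" for s using that by auto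
  have ex: "(\<exists>s\<in>{0..1::real}. \<exists>t\<in>{0..1::real}. P (1-s) t) \<longleftrightarrow> (\<exists>s\<in>{0..1}. \<exists>t\<in>{0..1}. P s t)" for P
  proof
    assume "\<exists>s\<in>{0..1::real}. \<exists>t\<in>{0..1::real}. P (1-s) t"
    then obtain s t where st: "s\<in>{0..1::real}" "t\<in>{0..1::real}" "P (1-s) t" by blast
    thus "\<exists>s\<in>{0..1}. \<exists>t\<in>{0..1}. P s t" using m by blast
  next
    assume "\<exists>s\<in>{0..1::real}. \<exists>t\<in>{0..1::real}. P s t"
    then obtain s t where st: "s\<in>{0..1::real}" "t\<in>{0..1::real}" "P s t" by blast
    hence "P (1-(1-s)) (t)" by simp
    thus "\<exists>s\<in>{0..1::real}. \<exists>t\<in>{0..1::real}. P (1-s) t" using m st by blast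
  qed
  obtain h1 h2 h3 h4 where hh: "\<forall>s\<in>{0..1}. \<forall>t\<in>{0..1}. \<not> (F1 s t = 0 \<and> F2 s t = 0 \<and> F3 s t = 0)"
    "(\<exists>s\<in>{0..1}. \<exists>t\<in>{0..1}. F2 s t = 0 \<and> F3 s t = 0) \<longrightarrow> J1 \<noteq> 0"
    "(\<exists>s\<in>{0..1}. \<exists>t\<in>{0..1}. F1 s t = 0 \<and> F3 s t = 0) \<longrightarrow> J2 \<noteq> 0"
    "\<forall>s\<in>{0..1}. \<forall>t\<in>{0..1}. (s = 0 \<or> s = 1 \<or> t = 0 \<or> t = 1) \<longrightarrow> \<not> (F2 s t = 0 \<and> F3 s t = 0) \<and> \<not> (F1 s t = 0 \<and> F3 s t = 0)"
    using h unfolding PPh'_def by blast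
  have h': "PPh' (\<lambda>s t. F1 (1-s) t) (\<lambda>s t. F2 (1-s) t) (\<lambda>s t. F3 (1-s) t) (-J1) (-J2)"
    unfolding PPh'_def
  proof (intro conjI)
    show "\<forall>s\<in>{0..1}. \<forall>t\<in>{0..1}. \<not> (F1 (1-s) t = 0 \<and> F2 (1-s) t = 0 \<and> F3 (1-s) t = 0)"
    proof (intro ballI)
      fix s t :: real assume "s\<in>{0..1}" "t\<in>{0..1}"
      hence st: "1-s \<in> {0..1}" "t \<in> {0..1}" by auto
      show "\<not> (F1 (1-s) t = 0 \<and> F2 (1-s) t = 0 \<and> F3 (1-s) t = 0)" using hh(1) st by blast
    qed
  next
    show "(\<exists>s\<in>{0..1}. \<exists>t\<in>{0..1}. F2 (1-s) t = 0 \<and> F3 (1-s) t = 0) \<longrightarrow> - J1 \<noteq> 0"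
      using hh(2) ex[of "\<lambda>s t. F2 s t = 0 \<and> F3 s t = 0"] by simp
  next
    show "(\<exists>s\<in>{0..1}. \<exists>t\<in>{0..1}. F1 (1-s) t = 0 \<and> F3 (1-s) t = 0) \<longrightarrow> - J2 \<noteq> 0"
      using hh(3) ex[of "\<lambda>s t. F1 s t = 0 \<and> F3 s t = 0"] by simp
  next
    show "\<forall>s\<in>{0..1}. \<forall>t\<in>{0..1}. (s = 0 \<or> s = 1 \<or> t = 0 \<or> t = 1) \<longrightarrow> \<not> (F2 (1-s) t = 0 \<and> F3 (1-s) t = 0) \<and> \<not> (F1 (1-s) t = 0 \<and> F3 (1-s) t = 0)"
    proof (intro ballI impI)
      fix s t :: real assume a: "s\<in>{0..1}" "t\<in>{0..1}" "s = 0 \<or> s = 1 \<or> t = 0 \<or> t = 1"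
      have st: "1-s \<in> {0..1}" "t \<in> {0..1}" "1-s = 0 \<or> 1-s = 1 \<or> t = 0 \<or> t = 1" using a by auto
      show "\<not> (F2 (1-s) t = 0 \<and> F3 (1-s) t = 0) \<and> \<not> (F1 (1-s) t = 0 \<and> F3 (1-s) t = 0)" using hh(4) st by blast
    qed
  qed
  have c: "PPc' (\<lambda>s t. F1 (1-s) t) (\<lambda>s t. F2 (1-s) t) (\<lambda>s t. F3 (1-s) t) (-J1) (-J2)" by (rule r[OF h'])
  have ss: "Tf (F1 (1-0) 0, F2 (1-0) 0, F3 (1-0) 0) (F1 (1-1) 0, F2 (1-1) 0, F3 (1-1) 0) + Tf (F1 (1-1) 0, F2 (1-1) 0, F3 (1-1) 0) (F1 (1-1) 1, F2 (1-1) 1, F3 (1-1) 1) + Tf (F1 (1-1) 1, F2 (1-1) 1, F3 (1-1) 1) (F1 (1-0) 1, F2 (1-0) 1, F3 (1-0) 1) + Tf (F1 (1-0) 1, F2 (1-0) 1, F3 (1-0) 1) (F1 (1-0) 0, F2 (1-0) 0, F3 (1-0) 0) = - (Tf (F1 0 0, F2 0 0, F3 0 0) (F1 1 0, F2 1 0, F3 1 0) + Tf (F1 1 0, F2 1 0, F3 1 0) (F1 1 1, F2 1 1, F3 1 1) + Tf (F1 1 1, F2 1 1, F3 1 1) (F1 0 1, F2 0 1, F3 0 1) + Tf (F1 0 1, F2 0 1, F3 0 1) (F1 0 0, F2 0 0, F3 0 0))"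
    apply (simp only: diff_zero diff_self)?
    apply (simp only: Tf_anti[where q="(F1 1 0, F2 1 0, F3 1 0)" and p="(F1 0 0, F2 0 0, F3 0 0)"]
      Tf_anti[where q="(F1 0 0, F2 0 0, F3 0 0)" and p="(F1 0 1, F2 0 1, F3 0 1)"]
      Tf_anti[where q="(F1 0 1, F2 0 1, F3 0 1)" and p="(F1 1 1, F2 1 1, F3 1 1)"]
      Tf_anti[where q="(F1 1 1, F2 1 1, F3 1 1)" and p="(F1 1 0, F2 1 0, F3 1 0)"])?
    by (simp add: algebra_simps)?
  have e1: "(\<exists>s\<in>{0..1::real}. \<exists>t\<in>{0..1::real}. F1 (1-s) t = 0 \<and> F3 (1-s) t = 0 \<and> F2 (1-s) t > 0) \<longleftrightarrow> (\<exists>s\<in>{0..1}. \<exists>t\<in>{0..1}. F1 s t = 0 \<and> F3 s t = 0 \<and> F2 s t > 0)"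
    by (rule ex)
  have e2: "(\<exists>s\<in>{0..1::real}. \<exists>t\<in>{0..1::real}. F2 (1-s) t = 0 \<and> F3 (1-s) t = 0 \<and> F1 (1-s) t > 0) \<longleftrightarrow> (\<exists>s\<in>{0..1}. \<exists>t\<in>{0..1}. F2 s t = 0 \<and> F3 s t = 0 \<and> F1 s t > 0)"
    by (rule ex)
  have c': "- (Tf (F1 0 0, F2 0 0, F3 0 0) (F1 1 0, F2 1 0, F3 1 0) + Tf (F1 1 0, F2 1 0, F3 1 0) (F1 1 1, F2 1 1, F3 1 1) + Tf (F1 1 1, F2 1 1, F3 1 1) (F1 0 1, F2 0 1, F3 0 1) + Tf (F1 0 1, F2 0 1, F3 0 1) (F1 0 0, F2 0 0, F3 0 0)) = (if \<exists>s\<in>{0..1}. \<exists>t\<in>{0..1}. F1 s t = 0 \<and> F3 s t = 0 \<and> F2 s t > 0 then sgn (-J2) else 0) - (if \<exists>s\<in>{0..1}. \<exists>t\<in>{0..1}. F2 s t = 0 \<and> F3 s t = 0 \<and> F1 s t > 0 then sgn (-J1) else 0)"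
    using c unfolding PPc'_def ss e1 e2 .
  have ifneg: "\<And>P x. (if P then - x else 0) = - (if P then x else (0::real))" by simp
  show ?thesis unfolding PPc'_def using c'[unfolded sgn_minus ifneg] by linarith
qed

lemma trT:
  assumes h: "PPh' F1 F2 F3 J1 J2"
    and r: "PPh' (\<lambda>s t. F1 s (1-t)) (\<lambda>s t. F2 s (1-t)) (\<lambda>s t. F3 s (1-t)) (-J1) (-J2) \<Longrightarrow> PPc' (\<lambda>s t. F1 s (1-t)) (\<lambda>s t. F2 s (1-t)) (\<lambda>s t. F3 s (1-t)) (-J1) (-J2)"
  shows "PPc' F1 F2 F3 J1 J2"
proof -
  have m: "1 - s \<in> {0..1::real}" if "s \<in> {0..1}" for s using that by auto
  have ex: "(\<exists>s\<in>{0..1::real}. \<exists>t\<in>{0..1::real}. P s (1-t)) \<longleftrightarrow> (\<exists>s\<in>{0..1}. \<exists>t\<in>{0..1}. P s t)" for P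
  proof
    assume "\<exists>s\<in>{0..1::real}. \<exists>t\<in>{0..1::real}. P s (1-t)"
    then obtain s t where st: "s\<in>{0..1::real}" "t\<in>{0..1::real}" "P s (1-t)" by blast
    thus "\<exists>s\<in>{0..1}. \<exists>t\<in>{0..1}. P s t" using m by blast
  next
    assume "\<exists>s\<in>{0..1::real}. \<exists>t\<in>{0..1::real}. P s t"
    then obtain s t where st: "s\<in>{0..1::real}" "t\<in>{0..1::real}" "P s t" by blast
    hence "P (s) (1-(1-t))" by simp
    thus "\<exists>s\<in>{0..1::real}. \<exists>t\<in>{0..1::real}. P s (1-t)" using m st by blast
  qed
  obtain h1 h2 h3 h4 where hh: "\<forall>s\<in>{0..1}. \<forall>t\<in>{0..1}. \<not> (F1 s t = 0 \<and> F2 s t = 0 \<and> F3 s t = 0)"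
    "(\<exists>s\<in>{0..1}. \<exists>t\<in>{0..1}. F2 s t = 0 \<and> F3 s t = 0) \<longrightarrow> J1 \<noteq> 0"
    "(\<exists>s\<in>{0..1}. \<exists>t\<in>{0..1}. F1 s t = 0 \<and> F3 s t = 0) \<longrightarrow> J2 \<noteq> 0"
    "\<forall>s\<in>{0..1}. \<forall>t\<in>{0..1}. (s = 0 \<or> s = 1 \<or> t = 0 \<or> t = 1) \<longrightarrow> \<not> (F2 s t = 0 \<and> F3 s t = 0) \<and> \<not> (F1 s t = 0 \<and> F3 s t = 0)"
    using h unfolding PPh'_def by blast
  have h': "PPh' (\<lambda>s t. F1 s (1-t)) (\<lambda>s t. F2 s (1-t)) (\<lambda>s t. F3 s (1-t)) (-J1) (-J2)"
    unfolding PPh'_def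
  proof (intro conjI)
    show "\<forall>s\<in>{0..1}. \<forall>t\<in>{0..1}. \<not> (F1 s (1-t) = 0 \<and> F2 s (1-t) = 0 \<and> F3 s (1-t) = 0)"
    proof (intro ballI)
      fix s t :: real assume "s\<in>{0..1}" "t\<in>{0..1}"
      hence st: "s \<in> {0..1}" "1-t \<in> {0..1}" by auto
      show "\<not> (F1 s (1-t) = 0 \<and> F2 s (1-t) = 0 \<and> F3 s (1-t) = 0)" using hh(1) st by blast
    qed
  next
    show "(\<exists>s\<in>{0..1}. \<exists>t\<in>{0..1}. F2 s (1-t) = 0 \<and> F3 s (1-t) = 0) \<longrightarrow> - J1 \<noteq> 0"
      using hh(2) ex[of "\<lambda>s t. F2 s t = 0 \<and> F3 s t = 0"] by simp
  next
    show "(\<exists>s\<in>{0..1}. \<exists>t\<in>{0..1}. F1 s (1-t) = 0 \<and> F3 s (1-t) = 0) \<longrightarrow> - J2 \<noteq> 0"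
      using hh(3) ex[of "\<lambda>s t. F1 s t = 0 \<and> F3 s t = 0"] by simp
  next
    show "\<forall>s\<in>{0..1}. \<forall>t\<in>{0..1}. (s = 0 \<or> s = 1 \<or> t = 0 \<or> t = 1) \<longrightarrow> \<not> (F2 s (1-t) = 0 \<and> F3 s (1-t) = 0) \<and> \<not> (F1 s (1-t) = 0 \<and> F3 s (1-t) = 0)"
    proof (intro ballI impI)
      fix s t :: real assume a: "s\<in>{0..1}" "t\<in>{0..1}" "s = 0 \<or> s = 1 \<or> t = 0 \<or> t = 1"
      have st: "s \<in> {0..1}" "1-t \<in> {0..1}" "s = 0 \<or> s = 1 \<or> 1-t = 0 \<or> 1-t = 1" using a by auto
      show "\<not> (F2 s (1-t) = 0 \<and> F3 s (1-t) = 0) \<and> \<not> (F1 s (1-t) = 0 \<and> F3 s (1-t) = 0)" using hh(4) st by blast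
    qed
  qed
  have c: "PPc' (\<lambda>s t. F1 s (1-t)) (\<lambda>s t. F2 s (1-t)) (\<lambda>s t. F3 s (1-t)) (-J1) (-J2)" by (rule r[OF h'])
  have ss: "Tf (F1 0 (1-0), F2 0 (1-0), F3 0 (1-0)) (F1 1 (1-0), F2 1 (1-0), F3 1 (1-0)) + Tf (F1 1 (1-0), F2 1 (1-0), F3 1 (1-0)) (F1 1 (1-1), F2 1 (1-1), F3 1 (1-1)) + Tf (F1 1 (1-1), F2 1 (1-1), F3 1 (1-1)) (F1 0 (1-1), F2 0 (1-1), F3 0 (1-1)) + Tf (F1 0 (1-1), F2 0 (1-1), F3 0 (1-1)) (F1 0 (1-0), F2 0 (1-0), F3 0 (1-0)) = - (Tf (F1 0 0, F2 0 0, F3 0 0) (F1 1 0, F2 1 0, F3 1 0) + Tf (F1 1 0, F2 1 0, F3 1 0) (F1 1 1, F2 1 1, F3 1 1) + Tf (F1 1 1, F2 1 1, F3 1 1) (F1 0 1, F2 0 1, F3 0 1) + Tf (F1 0 1, F2 0 1, F3 0 1) (F1 0 0, F2 0 0, F3 0 0))"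
    apply (simp only: diff_zero diff_self)?
    apply (simp only: Tf_anti[where q="(F1 1 0, F2 1 0, F3 1 0)" and p="(F1 0 0, F2 0 0, F3 0 0)"]
      Tf_anti[where q="(F1 0 0, F2 0 0, F3 0 0)" and p="(F1 0 1, F2 0 1, F3 0 1)"]
      Tf_anti[where q="(F1 0 1, F2 0 1, F3 0 1)" and p="(F1 1 1, F2 1 1, F3 1 1)"]
      Tf_anti[where q="(F1 1 1, F2 1 1, F3 1 1)" and p="(F1 1 0, F2 1 0, F3 1 0)"])?
    by (simp add: algebra_simps)?
  have e1: "(\<exists>s\<in>{0..1::real}. \<exists>t\<in>{0..1::real}. F1 s (1-t) = 0 \<and> F3 s (1-t) = 0 \<and> F2 s (1-t) > 0) \<longleftrightarrow> (\<exists>s\<in>{0..1}. \<exists>t\<in>{0..1}. F1 s t = 0 \<and> F3 s t = 0 \<and> F2 s t > 0)"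
    by (rule ex)
  have e2: "(\<exists>s\<in>{0..1::real}. \<exists>t\<in>{0..1::real}. F2 s (1-t) = 0 \<and> F3 s (1-t) = 0 \<and> F1 s (1-t) > 0) \<longleftrightarrow> (\<exists>s\<in>{0..1}. \<exists>t\<in>{0..1}. F2 s t = 0 \<and> F3 s t = 0 \<and> F1 s t > 0)"
    by (rule ex)
  have c': "- (Tf (F1 0 0, F2 0 0, F3 0 0) (F1 1 0, F2 1 0, F3 1 0) + Tf (F1 1 0, F2 1 0, F3 1 0) (F1 1 1, F2 1 1, F3 1 1) + Tf (F1 1 1, F2 1 1, F3 1 1) (F1 0 1, F2 0 1, F3 0 1) + Tf (F1 0 1, F2 0 1, F3 0 1) (F1 0 0, F2 0 0, F3 0 0)) = (if \<exists>s\<in>{0..1}. \<exists>t\<in>{0..1}. F1 s t = 0 \<and> F3 s t = 0 \<and> F2 s t > 0 then sgn (-J2) else 0) - (if \<exists>s\<in>{0..1}. \<exists>t\<in>{0..1}. F2 s t = 0 \<and> F3 s t = 0 \<and> F1 s t > 0 then sgn (-J1) else 0)"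
    using c unfolding PPc'_def ss e1 e2 .
  have ifneg: "\<And>P x. (if P then - x else 0) = - (if P then x else (0::real))" by simp
  show ?thesis unfolding PPc'_def using c'[unfolded sgn_minus ifneg] by linarith
qed

lemma trW:
  assumes h: "PPh' F1 F2 F3 J1 J2"
    and r: "PPh' (\<lambda>s t. F1 t s) (\<lambda>s t. F2 t s) (\<lambda>s t. F3 t s) (-J1) (-J2) \<Longrightarrow> PPc' (\<lambda>s t. F1 t s) (\<lambda>s t. F2 t s) (\<lambda>s t. F3 t s) (-J1) (-J2)"
  shows "PPc' F1 F2 F3 J1 J2"
proof -
  have m: "1 - s \<in> {0..1::real}" if "s \<in> {0..1}" for s using that by auto
  have ex: "(\<exists>s\<in>{0..1::real}. \<exists>t\<in>{0..1::real}. P t s) \<longleftrightarrow> (\<exists>s\<in>{0..1}. \<exists>t\<in>{0..1}. P s t)" for P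
  proof
    assume "\<exists>s\<in>{0..1::real}. \<exists>t\<in>{0..1::real}. P t s"
    then obtain s t where st: "s\<in>{0..1::real}" "t\<in>{0..1::real}" "P t s" by blast
    thus "\<exists>s\<in>{0..1}. \<exists>t\<in>{0..1}. P s t" using m by blast
  next
    assume "\<exists>s\<in>{0..1::real}. \<exists>t\<in>{0..1::real}. P s t"
    then obtain s t where st: "s\<in>{0..1::real}" "t\<in>{0..1::real}" "P s t" by blast
    hence "P (s) (t)" by simp
    thus "\<exists>s\<in>{0..1::real}. \<exists>t\<in>{0..1::real}. P t s" using m st by blast
  qed
  obtain h1 h2 h3 h4 where hh: "\<forall>s\<in>{0..1}. \<forall>t\<in>{0..1}. \<not> (F1 s t = 0 \<and> F2 s t = 0 \<and> F3 s t = 0)"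
    "(\<exists>s\<in>{0..1}. \<exists>t\<in>{0..1}. F2 s t = 0 \<and> F3 s t = 0) \<longrightarrow> J1 \<noteq> 0"
    "(\<exists>s\<in>{0..1}. \<exists>t\<in>{0..1}. F1 s t = 0 \<and> F3 s t = 0) \<longrightarrow> J2 \<noteq> 0"
    "\<forall>s\<in>{0..1}. \<forall>t\<in>{0..1}. (s = 0 \<or> s = 1 \<or> t = 0 \<or> t = 1) \<longrightarrow> \<not> (F2 s t = 0 \<and> F3 s t = 0) \<and> \<not> (F1 s t = 0 \<and> F3 s t = 0)"
    using h unfolding PPh'_def by blast
  have h': "PPh' (\<lambda>s t. F1 t s) (\<lambda>s t. F2 t s) (\<lambda>s t. F3 t s) (-J1) (-J2)"
    unfolding PPh'_def
  proof (intro conjI)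
    show "\<forall>s\<in>{0..1}. \<forall>t\<in>{0..1}. \<not> (F1 t s = 0 \<and> F2 t s = 0 \<and> F3 t s = 0)"
    proof (intro ballI)
      fix s t :: real assume "s\<in>{0..1}" "t\<in>{0..1}"
      hence st: "t \<in> {0..1}" "s \<in> {0..1}" by auto
      show "\<not> (F1 t s = 0 \<and> F2 t s = 0 \<and> F3 t s = 0)" using hh(1) st by blast
    qed
  next
    show "(\<exists>s\<in>{0..1}. \<exists>t\<in>{0..1}. F2 t s = 0 \<and> F3 t s = 0) \<longrightarrow> - J1 \<noteq> 0"
      using hh(2) ex[of "\<lambda>s t. F2 s t = 0 \<and> F3 s t = 0"] by simp
  next
    show "(\<exists>s\<in>{0..1}. \<exists>t\<in>{0..1}. F1 t s = 0 \<and> F3 t s = 0) \<longrightarrow> - J2 \<noteq> 0"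
      using hh(3) ex[of "\<lambda>s t. F1 s t = 0 \<and> F3 s t = 0"] by simp
  next
    show "\<forall>s\<in>{0..1}. \<forall>t\<in>{0..1}. (s = 0 \<or> s = 1 \<or> t = 0 \<or> t = 1) \<longrightarrow> \<not> (F2 t s = 0 \<and> F3 t s = 0) \<and> \<not> (F1 t s = 0 \<and> F3 t s = 0)"
    proof (intro ballI impI)
      fix s t :: real assume a: "s\<in>{0..1}" "t\<in>{0..1}" "s = 0 \<or> s = 1 \<or> t = 0 \<or> t = 1"
      have st: "t \<in> {0..1}" "s \<in> {0..1}" "t = 0 \<or> t = 1 \<or> s = 0 \<or> s = 1" using a by auto
      show "\<not> (F2 t s = 0 \<and> F3 t s = 0) \<and> \<not> (F1 t s = 0 \<and> F3 t s = 0)" using hh(4) st by blast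
    qed
  qed
  have c: "PPc' (\<lambda>s t. F1 t s) (\<lambda>s t. F2 t s) (\<lambda>s t. F3 t s) (-J1) (-J2)" by (rule r[OF h'])
  have ss: "Tf (F1 0 0, F2 0 0, F3 0 0) (F1 0 1, F2 0 1, F3 0 1) + Tf (F1 0 1, F2 0 1, F3 0 1) (F1 1 1, F2 1 1, F3 1 1) + Tf (F1 1 1, F2 1 1, F3 1 1) (F1 1 0, F2 1 0, F3 1 0) + Tf (F1 1 0, F2 1 0, F3 1 0) (F1 0 0, F2 0 0, F3 0 0) = - (Tf (F1 0 0, F2 0 0, F3 0 0) (F1 1 0, F2 1 0, F3 1 0) + Tf (F1 1 0, F2 1 0, F3 1 0) (F1 1 1, F2 1 1, F3 1 1) + Tf (F1 1 1, F2 1 1, F3 1 1) (F1 0 1, F2 0 1, F3 0 1) + Tf (F1 0 1, F2 0 1, F3 0 1) (F1 0 0, F2 0 0, F3 0 0))"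
    apply (simp only: diff_zero diff_self)?
    apply (simp only: Tf_anti[where q="(F1 1 0, F2 1 0, F3 1 0)" and p="(F1 0 0, F2 0 0, F3 0 0)"]
      Tf_anti[where q="(F1 0 0, F2 0 0, F3 0 0)" and p="(F1 0 1, F2 0 1, F3 0 1)"]
      Tf_anti[where q="(F1 0 1, F2 0 1, F3 0 1)" and p="(F1 1 1, F2 1 1, F3 1 1)"]
      Tf_anti[where q="(F1 1 1, F2 1 1, F3 1 1)" and p="(F1 1 0, F2 1 0, F3 1 0)"])?
    by (simp add: algebra_simps)?
  have e1: "(\<exists>s\<in>{0..1::real}. \<exists>t\<in>{0..1::real}. F1 t s = 0 \<and> F3 t s = 0 \<and> F2 t s > 0) \<longleftrightarrow> (\<exists>s\<in>{0..1}. \<exists>t\<in>{0..1}. F1 s t = 0 \<and> F3 s t = 0 \<and> F2 s t > 0)"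
    by (rule ex)
  have e2: "(\<exists>s\<in>{0..1::real}. \<exists>t\<in>{0..1::real}. F2 t s = 0 \<and> F3 t s = 0 \<and> F1 t s > 0) \<longleftrightarrow> (\<exists>s\<in>{0..1}. \<exists>t\<in>{0..1}. F2 s t = 0 \<and> F3 s t = 0 \<and> F1 s t > 0)"
    by (rule ex)
  have c': "- (Tf (F1 0 0, F2 0 0, F3 0 0) (F1 1 0, F2 1 0, F3 1 0) + Tf (F1 1 0, F2 1 0, F3 1 0) (F1 1 1, F2 1 1, F3 1 1) + Tf (F1 1 1, F2 1 1, F3 1 1) (F1 0 1, F2 0 1, F3 0 1) + Tf (F1 0 1, F2 0 1, F3 0 1) (F1 0 0, F2 0 0, F3 0 0)) = (if \<exists>s\<in>{0..1}. \<exists>t\<in>{0..1}. F1 s t = 0 \<and> F3 s t = 0 \<and> F2 s t > 0 then sgn (-J2) else 0) - (if \<exists>s\<in>{0..1}. \<exists>t\<in>{0..1}. F2 s t = 0 \<and> F3 s t = 0 \<and> F1 s t > 0 then sgn (-J1) else 0)"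
    using c unfolding PPc'_def ss e1 e2 .
  have ifneg: "\<And>P x. (if P then - x else 0) = - (if P then x else (0::real))" by simp
  show ?thesis unfolding PPc'_def using c'[unfolded sgn_minus ifneg] by linarith
qed


lemma LS: "(\<lambda>s t. lin a b c (1-s) t) = lin (a+b) (-b) c"
  by (intro ext) (simp add: lin_def algebra_simps)
lemma LT: "(\<lambda>s t. lin a b c s (1-t)) = lin (a-c) b (-c)"
  by (intro ext) (simp add: lin_def algebra_simps)
lemma LW: "(\<lambda>s t. lin a b c t s) = lin a (-c) (-b)"
  by (intro ext) (simp add: lin_def algebra_simps)

lemma PP_b3pos:
  assumes b3: "b3 > 0" and h: "PPh a1 a2 a3 b1 b2 b3 c1 c2 c3"
  shows "PPc a1 a2 a3 b1 b2 b3 c1 c2 c3"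
proof (cases "c3 \<le> 0")
  case True thus ?thesis using core b3 h by blast
next
  case False
  have j: "- (b2*c3 - b3*c2) = b2*(-c3) - b3*(-c2)" "- (b3*c1 - b1*c3) = b3*(-c1) - b1*(-c3)" by (simp_all add: algebra_simps)
  show ?thesis unfolding PPc_eq
  proof (rule trT)
    show "PPh' (lin a1 b1 c1) (lin a2 b2 c2) (lin a3 b3 c3) (b2 * c3 - b3 * c2) (b3 * c1 - b1 * c3)"
      using h unfolding PPh_eq .
  next
    assume "PPh' (\<lambda>s t. lin a1 b1 c1 s (1-t)) (\<lambda>s t. lin a2 b2 c2 s (1-t)) (\<lambda>s t. lin a3 b3 c3 s (1-t))
      (- (b2*c3 - b3*c2)) (- (b3*c1 - b1*c3))"
    hence "PPh (a1-c1) (a2-c2) (a3-c3) b1 b2 b3 (-c1) (-c2) (-c3)" unfolding LT j PPh_eq .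
    hence "PPc (a1-c1) (a2-c2) (a3-c3) b1 b2 b3 (-c1) (-c2) (-c3)" using core b3 False by simp
    thus "PPc' (\<lambda>s t. lin a1 b1 c1 s (1-t)) (\<lambda>s t. lin a2 b2 c2 s (1-t)) (\<lambda>s t. lin a3 b3 c3 s (1-t))
      (- (b2*c3 - b3*c2)) (- (b3*c1 - b1*c3))" unfolding LT j PPc_eq .
  qed
qed

lemma PP_b3nz:
  assumes b3: "b3 \<noteq> 0" and h: "PPh a1 a2 a3 b1 b2 b3 c1 c2 c3"
  shows "PPc a1 a2 a3 b1 b2 b3 c1 c2 c3"
proof (cases "b3 > 0")
  case True thus ?thesis using PP_b3pos h by blast
next
  case False
  have j: "- (b2*c3 - b3*c2) = (-b2)*c3 - (-b3)*c2" "- (b3*c1 - b1*c3) = (-b3)*c1 - (-b1)*c3" by (simp_all add: algebra_simps)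
  show ?thesis unfolding PPc_eq
  proof (rule trS)
    show "PPh' (lin a1 b1 c1) (lin a2 b2 c2) (lin a3 b3 c3) (b2 * c3 - b3 * c2) (b3 * c1 - b1 * c3)"
      using h unfolding PPh_eq .
  next
    assume "PPh' (\<lambda>s t. lin a1 b1 c1 (1-s) t) (\<lambda>s t. lin a2 b2 c2 (1-s) t) (\<lambda>s t. lin a3 b3 c3 (1-s) t)
      (- (b2*c3 - b3*c2)) (- (b3*c1 - b1*c3))"
    hence "PPh (a1+b1) (a2+b2) (a3+b3) (-b1) (-b2) (-b3) c1 c2 c3" unfolding LS j PPh_eq .
    hence "PPc (a1+b1) (a2+b2) (a3+b3) (-b1) (-b2) (-b3) c1 c2 c3" using PP_b3pos b3 False by simp
    thus "PPc' (\<lambda>s t. lin a1 b1 c1 (1-s) t) (\<lambda>s t. lin a2 b2 c2 (1-s) t) (\<lambda>s t. lin a3 b3 c3 (1-s) t)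
      (- (b2*c3 - b3*c2)) (- (b3*c1 - b1*c3))" unfolding LS j PPc_eq .
  qed
qed

lemma PP_all:
  assumes h: "PPh a1 a2 a3 b1 b2 b3 c1 c2 c3"
  shows "PPc a1 a2 a3 b1 b2 b3 c1 c2 c3"
proof (cases "b3 = 0")
  case False thus ?thesis using PP_b3nz h by blast
next
  case b30: True
  show ?thesis
  proof (cases "c3 = 0")
    case True
    have Z: "lin a3 b3 c3 s t = a3" for s t using b30 True by (simp add: lin_def)
    have j0: "b2*c3 - b3*c2 = 0" "b3*c1 - b1*c3 = 0" using b30 True by simp_all
    have n1: "\<not> (\<exists>s\<in>{0..1}. \<exists>t\<in>{0..1}. lin a2 b2 c2 s t = 0 \<and> lin a3 b3 c3 s t = 0 \<and> lin a1 b1 c1 s t > 0)"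
      using h j0 unfolding PPh_def by blast
    have n2: "\<not> (\<exists>s\<in>{0..1}. \<exists>t\<in>{0..1}. lin a1 b1 c1 s t = 0 \<and> lin a3 b3 c3 s t = 0 \<and> lin a2 b2 c2 s t > 0)"
      using h j0 unfolding PPh_def by blast
    show ?thesis by (rule PPc_trivial[OF n2 n1]) (simp_all add: Z)
  next
    case False
    have j: "- (b2*c3 - b3*c2) = (-c2)*(-b3) - (-c3)*(-b2)" "- (b3*c1 - b1*c3) = (-c3)*(-b1) - (-c1)*(-b3)" by (simp_all add: algebra_simps)
    show ?thesis unfolding PPc_eq
    proof (rule trW)
      show "PPh' (lin a1 b1 c1) (lin a2 b2 c2) (lin a3 b3 c3) (b2 * c3 - b3 * c2) (b3 * c1 - b1 * c3)"
        using h unfolding PPh_eq .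
    next
      assume "PPh' (\<lambda>s t. lin a1 b1 c1 t s) (\<lambda>s t. lin a2 b2 c2 t s) (\<lambda>s t. lin a3 b3 c3 t s)
        (- (b2*c3 - b3*c2)) (- (b3*c1 - b1*c3))"
      hence "PPh a1 a2 a3 (-c1) (-c2) (-c3) (-b1) (-b2) (-b3)" unfolding LW j PPh_eq .
      hence "PPc a1 a2 a3 (-c1) (-c2) (-c3) (-b1) (-b2) (-b3)" using PP_b3nz False by simp
      thus "PPc' (\<lambda>s t. lin a1 b1 c1 t s) (\<lambda>s t. lin a2 b2 c2 t s) (\<lambda>s t. lin a3 b3 c3 t s)
        (- (b2*c3 - b3*c2)) (- (b3*c1 - b1*c3))" unfolding LW j PPc_eq .
    qed
  qed
qed

lemma basis_decomp:
  fixes a b c z :: "real^3"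
  shows "(a \<bullet> cross3 b c) *\<^sub>R z = (z \<bullet> cross3 b c) *\<^sub>R a + (z \<bullet> cross3 c a) *\<^sub>R b + (z \<bullet> cross3 a b) *\<^sub>R c"
  apply (simp only: vec_eq_iff forall_3 cross3_def inner_vec_def sum_3 vector_component vector_add_component vector_scaleR_component)
  apply (simp only: vector_3 inner_real_def real_scaleR_def)
  apply (intro conjI; algebra)
  done

lemma triple_cyc: fixes x y z :: "real^3" shows "x \<bullet> cross3 y z = y \<bullet> cross3 z x"
  by (simp add: cross3_simps)

lemma triple_swap: fixes x y z :: "real^3" shows "x \<bullet> cross3 y z = cross3 x y \<bullet> z"
  by (simp add: cross3_simps)

lemma binet_cauchy: fixes a b c d :: "real^3"
  shows "cross3 a b \<bullet> cross3 c d = (a \<bullet> c) * (b \<bullet> d) - (a \<bullet> d) * (b \<bullet> c)"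
  by (simp add: cross3_simps)

lemma cross_cross: fixes x y z :: "real^3"
  shows "cross3 (cross3 x y) z = (x \<bullet> z) *\<^sub>R y - (y \<bullet> z) *\<^sub>R x"
  by (simp add: cross3_simps vec_eq_iff forall_3)

lemma dot_cross_self': fixes x y :: "real^3" shows "x \<bullet> cross3 x y = 0" "x \<bullet> cross3 y x = 0"
  by (simp_all add: cross3_simps)

definition Dz :: "real^3 \<Rightarrow> real^3 \<Rightarrow> real" where
  "Dz u u' = cross3 u u' \<bullet> cross3 u u'"
definition cX :: "real^3 \<Rightarrow> real^3 \<Rightarrow> real^3 \<Rightarrow> real" where
  "cX u u' z = (z \<bullet> cross3 u' (cross3 u u')) / Dz u u'"
definition cY :: "real^3 \<Rightarrow> real^3 \<Rightarrow> real^3 \<Rightarrow> real" where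
  "cY u u' z = (z \<bullet> cross3 (cross3 u u') u) / Dz u u'"
definition cZ :: "real^3 \<Rightarrow> real^3 \<Rightarrow> real^3 \<Rightarrow> real" where
  "cZ u u' z = (z \<bullet> cross3 u u') / Dz u u'"

lemma Dz_pos: "cross3 u u' \<noteq> 0 \<Longrightarrow> Dz u u' > 0"
  unfolding Dz_def by simp

lemma decomp:
  assumes "cross3 u u' \<noteq> 0"
  shows "z = cX u u' z *\<^sub>R u + cY u u' z *\<^sub>R u' + cZ u u' z *\<^sub>R cross3 u u'"
proof -
  define m where "m = cross3 u u'"
  have D: "u \<bullet> cross3 u' m = Dz u u'" unfolding Dz_def m_def by (simp add: triple_swap)
  have "Dz u u' > 0" using Dz_pos assms by blast
  have "(u \<bullet> cross3 u' m) *\<^sub>R z = (z \<bullet> cross3 u' m) *\<^sub>R u + (z \<bullet> cross3 m u) *\<^sub>R u' + (z \<bullet> cross3 u u') *\<^sub>R m"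
    using basis_decomp[of u u' m z] unfolding m_def .
  hence "Dz u u' *\<^sub>R z = (z \<bullet> cross3 u' m) *\<^sub>R u + (z \<bullet> cross3 m u) *\<^sub>R u' + (z \<bullet> cross3 u u') *\<^sub>R m"
    unfolding D .
  moreover have "z = (1 / Dz u u') *\<^sub>R (Dz u u' *\<^sub>R z)" using \<open>Dz u u' > 0\<close> by simp
  ultimately have "z = (1 / Dz u u') *\<^sub>R ((z \<bullet> cross3 u' m) *\<^sub>R u + (z \<bullet> cross3 m u) *\<^sub>R u' + (z \<bullet> cross3 u u') *\<^sub>R m)"
    by simp
  thus ?thesis unfolding cX_def cY_def cZ_def m_def by (simp add: scaleR_add_right divide_inverse_commute)
qed

lemma cX_lin: "cX u u' (x + y) = cX u u' x + cX u u' y" "cX u u' (x - y) = cX u u' x - cX u u' y"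
  "cX u u' (r *\<^sub>R x) = r * cX u u' x" "cX u u' (- x) = - cX u u' x"
  unfolding cX_def by (simp_all add: inner_add_left inner_diff_left add_divide_distrib diff_divide_distrib)
lemma cY_lin: "cY u u' (x + y) = cY u u' x + cY u u' y" "cY u u' (x - y) = cY u u' x - cY u u' y"
  "cY u u' (r *\<^sub>R x) = r * cY u u' x" "cY u u' (- x) = - cY u u' x"
  unfolding cY_def by (simp_all add: inner_add_left inner_diff_left add_divide_distrib diff_divide_distrib)
lemma cZ_lin: "cZ u u' (x + y) = cZ u u' x + cZ u u' y" "cZ u u' (x - y) = cZ u u' x - cZ u u' y"
  "cZ u u' (r *\<^sub>R x) = r * cZ u u' x" "cZ u u' (- x) = - cZ u u' x"
  unfolding cZ_def by (simp_all add: inner_add_left inner_diff_left add_divide_distrib diff_divide_distrib)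

lemma coords_u: assumes "cross3 u u' \<noteq> 0"
  shows "cX u u' u = 1" "cY u u' u = 0" "cZ u u' u = 0"
    "cX u u' u' = 0" "cY u u' u' = 1" "cZ u u' u' = 0"
proof -
  have D: "Dz u u' > 0" using Dz_pos assms by blast
  show "cX u u' u = 1" unfolding cX_def using D by (simp add: triple_swap Dz_def)
  show "cY u u' u = 0" unfolding cY_def by (simp add: dot_cross_self')
  show "cZ u u' u = 0" unfolding cZ_def by (simp add: dot_cross_self')
  show "cX u u' u' = 0" unfolding cX_def by (simp add: dot_cross_self')
  have e: "u' \<bullet> cross3 (cross3 u u') u = Dz u u'" unfolding Dz_def by (simp add: cross3_simps)
  show "cY u u' u' = 1" unfolding cY_def e using D by simp
  show "cZ u u' u' = 0" unfolding cZ_def by (simp add: dot_cross_self')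
qed

lemma zero_coords: assumes "cross3 u u' \<noteq> 0" "cX u u' z = 0" "cY u u' z = 0" "cZ u u' z = 0"
  shows "z = 0"
  using decomp[OF assms(1), of z] assms(2-4) by simp

lemma par_u: assumes "cross3 u u' \<noteq> 0"
  shows "(\<exists>\<tau>. z = \<tau> *\<^sub>R u \<and> P \<tau>) \<longleftrightarrow> cY u u' z = 0 \<and> cZ u u' z = 0 \<and> P (cX u u' z)"
proof
  assume "\<exists>\<tau>. z = \<tau> *\<^sub>R u \<and> P \<tau>"
  then obtain \<tau> where "z = \<tau> *\<^sub>R u" "P \<tau>" by blast
  thus "cY u u' z = 0 \<and> cZ u u' z = 0 \<and> P (cX u u' z)"
    using coords_u[OF assms] by (simp add: cX_lin cY_lin cZ_lin)
next
  assume "cY u u' z = 0 \<and> cZ u u' z = 0 \<and> P (cX u u' z)"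
  thus "\<exists>\<tau>. z = \<tau> *\<^sub>R u \<and> P \<tau>" using decomp[OF assms, of z] by (intro exI[of _ "cX u u' z"]) simp
qed

lemma par_u': assumes "cross3 u u' \<noteq> 0"
  shows "(\<exists>\<tau>. z = \<tau> *\<^sub>R u' \<and> P \<tau>) \<longleftrightarrow> cX u u' z = 0 \<and> cZ u u' z = 0 \<and> P (cY u u' z)"
proof
  assume "\<exists>\<tau>. z = \<tau> *\<^sub>R u' \<and> P \<tau>"
  then obtain \<tau> where "z = \<tau> *\<^sub>R u'" "P \<tau>" by blast
  thus "cX u u' z = 0 \<and> cZ u u' z = 0 \<and> P (cY u u' z)"
    using coords_u[OF assms] by (simp add: cX_lin cY_lin cZ_lin)
next
  assume "cX u u' z = 0 \<and> cZ u u' z = 0 \<and> P (cY u u' z)"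
  thus "\<exists>\<tau>. z = \<tau> *\<^sub>R u' \<and> P \<tau>" using decomp[OF assms, of z] by (intro exI[of _ "cY u u' z"]) simp
qed

lemma J_u: assumes "cross3 u u' \<noteq> 0"
  shows "cross3 a b \<bullet> u = Dz u u' * (cY u u' a * cZ u u' b - cZ u u' a * cY u u' b)"
proof -
  define m where "m = cross3 u u'"
  have D: "Dz u u' = m \<bullet> m" unfolding Dz_def m_def ..
  have Dp: "m \<bullet> m > 0" using Dz_pos[OF assms] D by simp
  have um: "u \<bullet> m = 0" "m \<bullet> u = 0" unfolding m_def by (simp_all add: dot_cross_self' inner_commute)
  have "(a \<bullet> cross3 m u) * (b \<bullet> m) - (a \<bullet> m) * (b \<bullet> cross3 m u) = cross3 a b \<bullet> cross3 (cross3 m u) m"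
    by (simp add: binet_cauchy)
  also have "cross3 (cross3 m u) m = (m \<bullet> m) *\<^sub>R u" by (simp add: cross_cross inner_commute um)
  finally have e: "(a \<bullet> cross3 m u) * (b \<bullet> m) - (a \<bullet> m) * (b \<bullet> cross3 m u) = (m \<bullet> m) * (cross3 a b \<bullet> u)"
    by simp
  show ?thesis unfolding cY_def cZ_def D[symmetric] m_def[symmetric] using Dp
    by (simp add: field_simps e[symmetric] D power2_eq_square)
qed

lemma J_u': assumes "cross3 u u' \<noteq> 0"
  shows "cross3 a b \<bullet> u' = Dz u u' * (cZ u u' a * cX u u' b - cX u u' a * cZ u u' b)"
proof -
  define m where "m = cross3 u u'"
  have D: "Dz u u' = m \<bullet> m" unfolding Dz_def m_def ..
  have Dp: "m \<bullet> m > 0" using Dz_pos[OF assms] D by simp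
  have um: "u' \<bullet> m = 0" "m \<bullet> u' = 0" unfolding m_def by (simp_all add: dot_cross_self' inner_commute)
  have "(a \<bullet> m) * (b \<bullet> cross3 u' m) - (a \<bullet> cross3 u' m) * (b \<bullet> m) = cross3 a b \<bullet> cross3 m (cross3 u' m)"
    by (simp add: binet_cauchy)
  also have "cross3 m (cross3 u' m) = (m \<bullet> m) *\<^sub>R u'"
  proof -
    have "cross3 m (cross3 u' m) = - cross3 (cross3 u' m) m" by (rule cross_skew)
    also have "\<dots> = (m \<bullet> m) *\<^sub>R u'" by (simp add: cross_cross inner_commute um)
    finally show ?thesis .
  qed
  finally have e: "(a \<bullet> m) * (b \<bullet> cross3 u' m) - (a \<bullet> cross3 u' m) * (b \<bullet> m) = (m \<bullet> m) * (cross3 a b \<bullet> u')"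
    by simp
  show ?thesis unfolding cX_def cZ_def D[symmetric] m_def[symmetric] using Dp
    by (simp add: field_simps e[symmetric] D power2_eq_square)
qed


lemma seg_param: "x \<in> seg v n i \<longleftrightarrow> (\<exists>s\<in>{0..1}. x = v i + s *\<^sub>R edge_dir v n i)"
proof -
  have "(1 - s) *\<^sub>R v i + s *\<^sub>R v (Suc i mod n) = v i + s *\<^sub>R edge_dir v n i" for s
    by (simp add: edge_dir_def algebra_simps)
  thus ?thesis unfolding seg_def closed_segment_def by auto
qed

lemma proj_lin: "proj u (x - y) = proj u x - proj u y" "proj u (r *\<^sub>R x) = r *\<^sub>R proj u x"
  unfolding proj_def by (simp_all add: inner_diff_left algebra_simps diff_divide_distrib)

lemma proj_zero_iff: assumes "u \<noteq> 0" shows "proj u x = 0 \<longleftrightarrow> (\<exists>\<tau>. x = \<tau> *\<^sub>R u)"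
proof
  assume "proj u x = 0" thus "\<exists>\<tau>. x = \<tau> *\<^sub>R u" unfolding proj_def by (intro exI[of _ "(x \<bullet> u) / (u \<bullet> u)"]) simp
next
  assume "\<exists>\<tau>. x = \<tau> *\<^sub>R u"
  then obtain \<tau> where "x = \<tau> *\<^sub>R u" by blast
  thus "proj u x = 0" unfolding proj_def using assms by simp
qed

lemma proj_eq_iff: assumes "u \<noteq> 0" shows "proj u x = proj u y \<longleftrightarrow> (\<exists>\<tau>. x - y = \<tau> *\<^sub>R u)"
  using proj_zero_iff[OF assms, of "x - y"] proj_lin(1)[of u x y] by simp

lemma pseg_inter_iff: assumes "u \<noteq> 0"
  shows "pseg u v n i \<inter> pseg u v n j \<noteq> {} \<longleftrightarrow> (\<exists>p\<in>seg v n i. \<exists>q\<in>seg v n j. \<exists>\<tau>. p - q = \<tau> *\<^sub>R u)"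
  unfolding pseg_def using proj_eq_iff[OF assms] by blast

lemma adjacent_sym: "adjacent n i j \<longleftrightarrow> adjacent n j i"
  unfolding adjacent_def by blast

definition Wd :: "(nat \<Rightarrow> real^3) \<Rightarrow> nat \<Rightarrow> real^3 \<Rightarrow> nat \<Rightarrow> nat \<Rightarrow> real" where
  "Wd v n w i j = (if \<exists>s\<in>{0..1}. \<exists>t\<in>{0..1}. \<exists>\<tau>>0.
        (v i + s *\<^sub>R edge_dir v n i) - (v j + t *\<^sub>R edge_dir v n j) = \<tau> *\<^sub>R w
     then sgn (cross3 (edge_dir v n i) (edge_dir v n j) \<bullet> w) else 0)"

lemma Wd_ex_iff: "(\<exists>s\<in>{0..1}. \<exists>t\<in>{0..1}. \<exists>\<tau>>0.
        (v i + s *\<^sub>R edge_dir v n i) - (v j + t *\<^sub>R edge_dir v n j) = \<tau> *\<^sub>R w)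
   \<longleftrightarrow> (\<exists>p\<in>seg v n i. \<exists>q\<in>seg v n j. \<exists>\<tau>>0. p - q = \<tau> *\<^sub>R w)"
proof
  assume "\<exists>s\<in>{0..1}. \<exists>t\<in>{0..1}. \<exists>\<tau>>0.
        (v i + s *\<^sub>R edge_dir v n i) - (v j + t *\<^sub>R edge_dir v n j) = \<tau> *\<^sub>R w"
  then obtain s t \<tau> where a: "s\<in>{0..1}" "t\<in>{0..1}" "\<tau> > 0"
    "(v i + s *\<^sub>R edge_dir v n i) - (v j + t *\<^sub>R edge_dir v n j) = \<tau> *\<^sub>R w" by blast
  have "v i + s *\<^sub>R edge_dir v n i \<in> seg v n i" "v j + t *\<^sub>R edge_dir v n j \<in> seg v n j"
    unfolding seg_param using a(1,2) by blast+
  thus "\<exists>p\<in>seg v n i. \<exists>q\<in>seg v n j. \<exists>\<tau>>0. p - q = \<tau> *\<^sub>R w" using a(3,4) by blast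
next
  assume "\<exists>p\<in>seg v n i. \<exists>q\<in>seg v n j. \<exists>\<tau>>0. p - q = \<tau> *\<^sub>R w"
  then obtain p q \<tau> where a: "p \<in> seg v n i" "q \<in> seg v n j" "\<tau> > 0" "p - q = \<tau> *\<^sub>R w" by blast
  obtain s where s: "s\<in>{0..1}" "p = v i + s *\<^sub>R edge_dir v n i" using a(1) unfolding seg_param by blast
  obtain t where t: "t\<in>{0..1}" "q = v j + t *\<^sub>R edge_dir v n j" using a(2) unfolding seg_param by blast
  show "\<exists>s\<in>{0..1}. \<exists>t\<in>{0..1}. \<exists>\<tau>>0.
        (v i + s *\<^sub>R edge_dir v n i) - (v j + t *\<^sub>R edge_dir v n j) = \<tau> *\<^sub>R w"
    using s t a(3,4) by blast
qed

lemma card_le1_eq: "finite A \<Longrightarrow> card A \<le> 1 \<Longrightarrow> x \<in> A \<Longrightarrow> y \<in> A \<Longrightarrow> x = y"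
  using card_le_Suc0_iff_eq by fastforce

lemma gp_D:
  assumes "general_position v n u"
  shows gp_nz: "u \<noteq> 0"
    and gp_edge: "\<And>i. i < n \<Longrightarrow> proj u (edge_dir v n i) \<noteq> 0"
    and gp_fin: "\<And>i j. i < n \<Longrightarrow> j < n \<Longrightarrow> i \<noteq> j \<Longrightarrow> \<not> adjacent n i j \<Longrightarrow> finite (pseg u v n i \<inter> pseg u v n j)"
    and gp_card: "\<And>i j. i < n \<Longrightarrow> j < n \<Longrightarrow> i \<noteq> j \<Longrightarrow> \<not> adjacent n i j \<Longrightarrow> card (pseg u v n i \<inter> pseg u v n j) \<le> 1"
    and gp_vert: "\<And>i j k. i < n \<Longrightarrow> j < n \<Longrightarrow> i \<noteq> j \<Longrightarrow> \<not> adjacent n i j \<Longrightarrow> k < n \<Longrightarrow> proj u (v k) \<notin> pseg u v n i \<inter> pseg u v n j"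
    and gp_trans: "\<And>i j. i < n \<Longrightarrow> j < n \<Longrightarrow> i \<noteq> j \<Longrightarrow> \<not> adjacent n i j \<Longrightarrow> pseg u v n i \<inter> pseg u v n j \<noteq> {} \<Longrightarrow> cross3 (edge_dir v n i) (edge_dir v n j) \<bullet> u \<noteq> 0"
proof -
  note a = assms[unfolded general_position_def]
  show "u \<noteq> 0" using a by (rule conjunct1)
  note b = a[THEN conjunct2, THEN conjunct1]
  show "\<And>i. i < n \<Longrightarrow> proj u (edge_dir v n i) \<noteq> 0" using b by blast
  note c = a[THEN conjunct2, THEN conjunct2, THEN conjunct2, THEN conjunct1]
  show "\<And>i j. i < n \<Longrightarrow> j < n \<Longrightarrow> i \<noteq> j \<Longrightarrow> \<not> adjacent n i j \<Longrightarrow> finite (pseg u v n i \<inter> pseg u v n j)"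
    using c by blast
  show "\<And>i j. i < n \<Longrightarrow> j < n \<Longrightarrow> i \<noteq> j \<Longrightarrow> \<not> adjacent n i j \<Longrightarrow> card (pseg u v n i \<inter> pseg u v n j) \<le> 1"
    using c by blast
  show "\<And>i j k. i < n \<Longrightarrow> j < n \<Longrightarrow> i \<noteq> j \<Longrightarrow> \<not> adjacent n i j \<Longrightarrow> k < n \<Longrightarrow> proj u (v k) \<notin> pseg u v n i \<inter> pseg u v n j"
    using c by blast
  show "\<And>i j. i < n \<Longrightarrow> j < n \<Longrightarrow> i \<noteq> j \<Longrightarrow> \<not> adjacent n i j \<Longrightarrow> pseg u v n i \<inter> pseg u v n j \<noteq> {} \<Longrightarrow> cross3 (edge_dir v n i) (edge_dir v n j) \<bullet> u \<noteq> 0"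
    using c by blast
qed

lemma pair_unique:
  assumes gp: "general_position v n w" and ij: "i < n" "j < n" "i \<noteq> j" "\<not> adjacent n i j"
    and p: "p \<in> seg v n i" "q \<in> seg v n j" "p - q = \<tau> *\<^sub>R w"
    and p': "p' \<in> seg v n i" "q' \<in> seg v n j" "p' - q' = \<tau>' *\<^sub>R w"
  shows "\<tau>' = \<tau>"
proof -
  have w0: "w \<noteq> 0" using gp_nz[OF gp] .
  have fin: "finite (pseg w v n i \<inter> pseg w v n j)" "card (pseg w v n i \<inter> pseg w v n j) \<le> 1"
    using gp_fin[OF gp ij] gp_card[OF gp ij] by blast+
  have di: "proj w (edge_dir v n i) \<noteq> 0" "proj w (edge_dir v n j) \<noteq> 0"
    using gp_edge[OF gp] ij by blast+
  have pq1: "proj w p = proj w q" using proj_eq_iff[OF w0, of p q] p by blast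
  have pq2: "proj w p' = proj w q'" using proj_eq_iff[OF w0, of p' q'] p' by blast
  have m1: "proj w p \<in> pseg w v n i \<inter> pseg w v n j"
    unfolding pseg_def using p(1,2) pq1 by (metis IntI imageI)
  have m2: "proj w p' \<in> pseg w v n i \<inter> pseg w v n j"
    unfolding pseg_def using p'(1,2) pq2 by (metis IntI imageI)
  have e1: "proj w p = proj w p'" using card_le1_eq[OF fin m1 m2] .
  have e2: "proj w q = proj w p" using proj_eq_iff[OF w0, of p q] p by auto
  have e3: "proj w q' = proj w p'" using proj_eq_iff[OF w0, of p' q'] p' by auto
  obtain s s' where s: "s\<in>{0..1}" "p = v i + s *\<^sub>R edge_dir v n i" "s'\<in>{0..1}" "p' = v i + s' *\<^sub>R edge_dir v n i"
    using p(1) p'(1) unfolding seg_param by blast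
  obtain t t' where t: "t\<in>{0..1}" "q = v j + t *\<^sub>R edge_dir v n j" "t'\<in>{0..1}" "q' = v j + t' *\<^sub>R edge_dir v n j"
    using p(2) p'(2) unfolding seg_param by blast
  have "proj w (p - p') = 0" using e1 proj_lin(1)[of w p p'] by simp
  moreover have "p - p' = (s - s') *\<^sub>R edge_dir v n i" using s by (simp add: algebra_simps)
  ultimately have "(s - s') *\<^sub>R proj w (edge_dir v n i) = 0" using proj_lin(2) by metis
  hence "s = s'" using di(1) by simp
  hence pp: "p = p'" using s by simp
  have "proj w (q - q') = 0" using e1 e2 e3 proj_lin(1)[of w q q'] by simp
  moreover have "q - q' = (t - t') *\<^sub>R edge_dir v n j" using t by (simp add: algebra_simps)
  ultimately have "(t - t') *\<^sub>R proj w (edge_dir v n j) = 0" using proj_lin(2) by metis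
  hence "t = t'" using di(2) by simp
  hence qq: "q = q'" using t by simp
  have "\<tau> *\<^sub>R w = \<tau>' *\<^sub>R w" using p(3) p'(3) pp qq by metis
  hence "(\<tau> - \<tau>') *\<^sub>R w = 0" by (simp add: scaleR_diff_left)
  thus ?thesis using w0 by simp
qed

lemma knot_disjoint:
  assumes "polygonal_knot v n" "i < n" "j < n" "i \<noteq> j" "\<not> adjacent n i j"
  shows "seg v n i \<inter> seg v n j = {}"
  using assms unfolding polygonal_knot_def by blast

lemma pair_sign:
  assumes K: "polygonal_knot v n" and gp: "general_position v n w"
    and ij: "i < n" "j < n" "i \<noteq> j" "\<not> adjacent n i j"
    and ne: "pseg w v n i \<inter> pseg w v n j \<noteq> {}"
  shows "crossing_sign v n w i j = Wd v n w i j + Wd v n w j i"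
proof -
  have w0: "w \<noteq> 0" using gp_nz[OF gp] .
  obtain p q \<tau> where pq: "p \<in> seg v n i" "q \<in> seg v n j" "p - q = \<tau> *\<^sub>R w"
    using ne pseg_inter_iff[OF w0] by blast
  have uniq: "\<tau>' = \<tau>" if "p' \<in> seg v n i" "q' \<in> seg v n j" "p' - q' = \<tau>' *\<^sub>R w" for p' q' \<tau>'
    using pair_unique[OF gp ij pq that] .
  have "p \<noteq> q" using knot_disjoint[OF K ij] pq by blast
  hence t0: "\<tau> \<noteq> 0" using pq by auto
  have h: "height v n w i j = \<tau>"
    unfolding height_def
  proof (rule some_equality)
    show "\<exists>p\<in>seg v n i. \<exists>q\<in>seg v n j. p - q = \<tau> *\<^sub>R w" using pq by blast
  next
    fix t assume "\<exists>p\<in>seg v n i. \<exists>q\<in>seg v n j. p - q = t *\<^sub>R w"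
    thus "t = \<tau>" using uniq by blast
  qed
  define K where "K = cross3 (edge_dir v n i) (edge_dir v n j) \<bullet> w"
  have K': "cross3 (edge_dir v n j) (edge_dir v n i) \<bullet> w = - K"
    unfolding K_def by (subst cross_skew) simp
  have ex1: "(\<exists>p\<in>seg v n i. \<exists>q\<in>seg v n j. \<exists>\<tau>'>0. p - q = \<tau>' *\<^sub>R w) \<longleftrightarrow> \<tau> > 0"
  proof
    assume "\<exists>p\<in>seg v n i. \<exists>q\<in>seg v n j. \<exists>\<tau>'>0. p - q = \<tau>' *\<^sub>R w"
    then obtain p' q' \<tau>' where a: "p' \<in> seg v n i" "q' \<in> seg v n j" "\<tau>' > 0" "p' - q' = \<tau>' *\<^sub>R w" by blast
    have "\<tau>' = \<tau>" using uniq[OF a(1,2,4)] .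
    thus "\<tau> > 0" using a(3) by simp
  next
    assume "\<tau> > 0"
    thus "\<exists>p\<in>seg v n i. \<exists>q\<in>seg v n j. \<exists>\<tau>'>0. p - q = \<tau>' *\<^sub>R w" using pq by blast
  qed
  have ex2: "(\<exists>q\<in>seg v n j. \<exists>p\<in>seg v n i. \<exists>\<tau>'>0. q - p = \<tau>' *\<^sub>R w) \<longleftrightarrow> \<tau> < 0"
  proof
    assume "\<exists>q\<in>seg v n j. \<exists>p\<in>seg v n i. \<exists>\<tau>'>0. q - p = \<tau>' *\<^sub>R w"
    then obtain q' p' \<tau>' where a: "q' \<in> seg v n j" "p' \<in> seg v n i" "\<tau>' > 0" "q' - p' = \<tau>' *\<^sub>R w" by blast
    have "p' - q' = (-\<tau>') *\<^sub>R w" using a(4) by (metis minus_diff_eq scaleR_minus_left)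
    hence "-\<tau>' = \<tau>" using uniq[OF a(2,1)] by blast
    thus "\<tau> < 0" using a(3) by simp
  next
    assume "\<tau> < 0"
    moreover have "q - p = (-\<tau>) *\<^sub>R w" using pq(3) by (metis minus_diff_eq scaleR_minus_left)
    moreover have "-\<tau> > 0" using \<open>\<tau> < 0\<close> by simp
    ultimately show "\<exists>q\<in>seg v n j. \<exists>p\<in>seg v n i. \<exists>\<tau>'>0. q - p = \<tau>' *\<^sub>R w" using pq(1,2) by blast
  qed
  have "Wd v n w i j = (if \<tau> > 0 then sgn K else 0)"
    unfolding Wd_def Wd_ex_iff ex1 K_def ..
  moreover have "Wd v n w j i = (if \<tau> < 0 then - sgn K else 0)"
    unfolding Wd_def Wd_ex_iff ex2 K' by (simp add: sgn_minus)
  moreover have "crossing_sign v n w i j = sgn (\<tau> * K)"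
    unfolding crossing_sign_def h K_def ..
  ultimately show ?thesis
  proof -
    assume a: "Wd v n w i j = (if \<tau> > 0 then sgn K else 0)" "Wd v n w j i = (if \<tau> < 0 then - sgn K else 0)"
      "crossing_sign v n w i j = sgn (\<tau> * K)"
    show ?thesis
    proof (cases "\<tau> > 0")
      case True thus ?thesis using a by (simp add: sgn_mult)
    next
      case False hence "\<tau> < 0" using t0 by simp
      thus ?thesis using a by (simp add: sgn_mult)
    qed
  qed
qed

lemma pair_zero:
  assumes gp: "general_position v n w"
    and e: "pseg w v n i \<inter> pseg w v n j = {}"
  shows "Wd v n w i j = 0" "Wd v n w j i = 0"
proof -
  have w0: "w \<noteq> 0" using gp_nz[OF gp] .
  have "\<not> (\<exists>p\<in>seg v n i. \<exists>q\<in>seg v n j. \<exists>\<tau>. p - q = \<tau> *\<^sub>R w)" using e pseg_inter_iff[OF w0] by blast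
  moreover have "\<not> (\<exists>q\<in>seg v n j. \<exists>p\<in>seg v n i. \<exists>\<tau>. q - p = \<tau> *\<^sub>R w)"
  proof
    assume "\<exists>q\<in>seg v n j. \<exists>p\<in>seg v n i. \<exists>\<tau>. q - p = \<tau> *\<^sub>R w"
    then obtain q p \<tau> where "q\<in>seg v n j" "p\<in>seg v n i" "q - p = \<tau> *\<^sub>R w" by blast
    moreover hence "p - q = (-\<tau>) *\<^sub>R w" by (metis minus_diff_eq scaleR_minus_left)
    ultimately show False using e pseg_inter_iff[OF w0] by blast
  qed
  ultimately show "Wd v n w i j = 0" "Wd v n w j i = 0"
    unfolding Wd_def Wd_ex_iff by auto
qed


lemma writhe_ordered:
  assumes K: "polygonal_knot v n" and gp: "general_position v n w"
  shows "writhe v n w = (\<Sum>i<n. \<Sum>j\<in>{j. j < n \<and> j \<noteq> i \<and> \<not> adjacent n i j}. Wd v n w i j)"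
proof -
  define Slt where "Slt = {(i,j). i < j \<and> j < n \<and> \<not> adjacent n i j}"
  define Sord where "Sord = {(i,j). i < n \<and> j < n \<and> i \<noteq> j \<and> \<not> adjacent n i j}"
  have finS: "finite Slt" "finite Sord"
  proof -
    have "Slt \<subseteq> {..<n} \<times> {..<n}" "Sord \<subseteq> {..<n} \<times> {..<n}" unfolding Slt_def Sord_def by auto
    thus "finite Slt" "finite Sord" by (auto intro: finite_subset)
  qed
  have sub: "crossings v n w \<subseteq> Slt" unfolding crossings_def Slt_def by auto
  have "writhe v n w = (\<Sum>x\<in>crossings v n w. crossing_sign v n w (fst x) (snd x))"
    unfolding writhe_def by (simp add: case_prod_beta)
  also have "\<dots> = (\<Sum>x\<in>Slt. Wd v n w (fst x) (snd x) + Wd v n w (snd x) (fst x))"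
  proof (rule sum.mono_neutral_cong_left[OF finS(1) sub])
    show "\<forall>x\<in>Slt - crossings v n w. Wd v n w (fst x) (snd x) + Wd v n w (snd x) (fst x) = 0"
    proof
      fix x assume x: "x \<in> Slt - crossings v n w"
      obtain i j where ij: "x = (i,j)" by (cases x)
      have "pseg w v n i \<inter> pseg w v n j = {}" using x unfolding ij Slt_def crossings_def by auto
      thus "Wd v n w (fst x) (snd x) + Wd v n w (snd x) (fst x) = 0" using pair_zero[OF gp] unfolding ij by simp
    qed
  next
    fix x assume x: "x \<in> crossings v n w"
    obtain i j where ij: "x = (i,j)" by (cases x)
    have c: "i < n" "j < n" "i \<noteq> j" "\<not> adjacent n i j" "pseg w v n i \<inter> pseg w v n j \<noteq> {}"
      using x unfolding ij crossings_def by auto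
    show "crossing_sign v n w (fst x) (snd x) = Wd v n w (fst x) (snd x) + Wd v n w (snd x) (fst x)"
      unfolding ij using pair_sign[OF K gp c] by simp
  qed
  also have "\<dots> = (\<Sum>x\<in>Slt. Wd v n w (fst x) (snd x)) + (\<Sum>x\<in>Slt. Wd v n w (snd x) (fst x))"
    by (rule sum.distrib)
  also have "(\<Sum>x\<in>Slt. Wd v n w (snd x) (fst x)) = (\<Sum>x\<in>prod.swap ` Slt. Wd v n w (fst x) (snd x))"
    by (subst sum.reindex) (auto simp: inj_on_def)
  also have "(\<Sum>x\<in>Slt. Wd v n w (fst x) (snd x)) + (\<Sum>x\<in>prod.swap ` Slt. Wd v n w (fst x) (snd x))
      = (\<Sum>x\<in>Slt \<union> prod.swap ` Slt. Wd v n w (fst x) (snd x))"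
    by (rule sum.union_disjoint[symmetric]) (use finS in \<open>auto simp: Slt_def\<close>)
  also have "Slt \<union> prod.swap ` Slt = Sord"
  proof
    show "Slt \<union> prod.swap ` Slt \<subseteq> Sord" unfolding Slt_def Sord_def using adjacent_sym by auto
  next
    show "Sord \<subseteq> Slt \<union> prod.swap ` Slt"
    proof
      fix x assume "x \<in> Sord"
      then obtain i j where ij: "x = (i,j)" "i < n" "j < n" "i \<noteq> j" "\<not> adjacent n i j" unfolding Sord_def by auto
      show "x \<in> Slt \<union> prod.swap ` Slt"
      proof (cases "i < j")
        case True thus ?thesis using ij unfolding Slt_def by auto
      next
        case False
        hence "(j,i) \<in> Slt" using ij adjacent_sym unfolding Slt_def by auto
        hence "prod.swap (j,i) \<in> prod.swap ` Slt" by (rule imageI)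
        thus ?thesis using ij by simp
      qed
    qed
  qed
  also have "Sord = Sigma {..<n} (\<lambda>i. {j. j < n \<and> j \<noteq> i \<and> \<not> adjacent n i j})"
    unfolding Sord_def by auto
  also have "(\<Sum>x\<in>Sigma {..<n} (\<lambda>i. {j. j < n \<and> j \<noteq> i \<and> \<not> adjacent n i j}). Wd v n w (fst x) (snd x))
     = (\<Sum>i<n. \<Sum>j\<in>{j. j < n \<and> j \<noteq> i \<and> \<not> adjacent n i j}. Wd v n w i j)"
    by (subst sum.Sigma) (auto simp: case_prod_beta)
  finally show ?thesis .
qed

definition co :: "real^3 \<Rightarrow> real^3 \<Rightarrow> real^3 \<Rightarrow> real \<times> real \<times> real" where
  "co u u' z = (cX u u' z, cY u u' z, cZ u u' z)"
definition Ge :: "real^3 \<Rightarrow> real^3 \<Rightarrow> (nat \<Rightarrow> real^3) \<Rightarrow> nat \<Rightarrow> nat \<Rightarrow> nat \<Rightarrow> real" where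
  "Ge u u' v n e k = Tf (co u u' (v e - v k)) (co u u' (v (Suc e mod n) - v k))"
definition He :: "real^3 \<Rightarrow> real^3 \<Rightarrow> (nat \<Rightarrow> real^3) \<Rightarrow> nat \<Rightarrow> nat \<Rightarrow> nat \<Rightarrow> real" where
  "He u u' v n e k = Tf (co u u' (v k - v e)) (co u u' (v k - v (Suc e mod n)))"

lemma lin_coords:
  "lin (cX u u' A) (cX u u' B) (cX u u' C) s t = cX u u' (A + s *\<^sub>R B - t *\<^sub>R C)"
  "lin (cY u u' A) (cY u u' B) (cY u u' C) s t = cY u u' (A + s *\<^sub>R B - t *\<^sub>R C)"
  "lin (cZ u u' A) (cZ u u' B) (cZ u u' C) s t = cZ u u' (A + s *\<^sub>R B - t *\<^sub>R C)"
  by (simp_all add: lin_def cX_lin cY_lin cZ_lin)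

lemma vert_not_par:
  assumes gp: "general_position v n w" and ij: "i < n" "j < n" "i \<noteq> j" "\<not> adjacent n i j"
    and k: "k < n" and vk: "v k \<in> seg v n i \<and> x \<in> seg v n j \<or> v k \<in> seg v n j \<and> x \<in> seg v n i"
  shows "\<not> (\<exists>\<tau>. v k - x = \<tau> *\<^sub>R w)"
proof
  assume "\<exists>\<tau>. v k - x = \<tau> *\<^sub>R w"
  hence e: "proj w (v k) = proj w x" using proj_eq_iff[OF gp_nz[OF gp]] by blast
  have "proj w (v k) \<in> pseg w v n i \<inter> pseg w v n j"
    using vk e unfolding pseg_def by (metis IntI imageI)
  thus False using gp_vert[OF gp ij k] by blast
qed

lemma seg_ends: "i < n \<Longrightarrow> 0 < n \<Longrightarrow> v i \<in> seg v n i" "i < n \<Longrightarrow> 0 < n \<Longrightarrow> v (Suc i mod n) \<in> seg v n i"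
  unfolding seg_def by auto

lemma P_ends: "v i + 0 *\<^sub>R edge_dir v n i = v i" "v i + 1 *\<^sub>R edge_dir v n i = v (Suc i mod n)"
  by (simp_all add: edge_dir_def)

lemma pair_SS:
  assumes K: "polygonal_knot v n" and gu: "general_position v n u" and gu': "general_position v n u'"
    and nz: "cross3 u u' \<noteq> 0"
    and ij: "i < n" "j < n" "i \<noteq> j" "\<not> adjacent n i j"
  shows "Wd v n u' i j - Wd v n u i j = Ge u u' v n i j + He u u' v n j (Suc i mod n) - Ge u u' v n i (Suc j mod n) - He u u' v n j i"
proof -
  have n0: "0 < n" using ij by simp
  define A where "A = v i - v j"
  define B where "B = edge_dir v n i"
  define C where "C = edge_dir v n j"
  have rr: "(v i + s *\<^sub>R edge_dir v n i) - (v j + t *\<^sub>R edge_dir v n j) = A + s *\<^sub>R B - t *\<^sub>R C" for s t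
    unfolding A_def B_def C_def by (simp add: algebra_simps)
  let ?a1 = "cX u u' A" and ?a2 = "cY u u' A" and ?a3 = "cZ u u' A"
  let ?b1 = "cX u u' B" and ?b2 = "cY u u' B" and ?b3 = "cZ u u' B"
  let ?c1 = "cX u u' C" and ?c2 = "cY u u' C" and ?c3 = "cZ u u' C"
  have Dp: "Dz u u' > 0" using Dz_pos[OF nz] .
  have inseg: "v i + s *\<^sub>R edge_dir v n i \<in> seg v n i" "v j + t *\<^sub>R edge_dir v n j \<in> seg v n j"
    if "s \<in> {0..1}" "t \<in> {0..1}" for s t
    unfolding seg_param using that by blast+
  have H: "PPh ?a1 ?a2 ?a3 ?b1 ?b2 ?b3 ?c1 ?c2 ?c3"
    unfolding PPh_def lin_coords
  proof (intro conjI)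
    show "\<forall>s\<in>{0..1}. \<forall>t\<in>{0..1}. \<not> (cX u u' (A + s *\<^sub>R B - t *\<^sub>R C) = 0 \<and> cY u u' (A + s *\<^sub>R B - t *\<^sub>R C) = 0 \<and> cZ u u' (A + s *\<^sub>R B - t *\<^sub>R C) = 0)"
    proof (intro ballI notI)
      fix s t :: real assume st: "s \<in> {0..1}" "t \<in> {0..1}"
        and z: "cX u u' (A + s *\<^sub>R B - t *\<^sub>R C) = 0 \<and> cY u u' (A + s *\<^sub>R B - t *\<^sub>R C) = 0 \<and> cZ u u' (A + s *\<^sub>R B - t *\<^sub>R C) = 0"
      have "A + s *\<^sub>R B - t *\<^sub>R C = 0" using zero_coords[OF nz] z by blast
      hence "(v i + s *\<^sub>R edge_dir v n i) - (v j + t *\<^sub>R edge_dir v n j) = 0" unfolding rr .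
      hence "v i + s *\<^sub>R edge_dir v n i = v j + t *\<^sub>R edge_dir v n j" by (rule right_minus_eq[THEN iffD1])
      hence "v i + s *\<^sub>R edge_dir v n i \<in> seg v n i \<inter> seg v n j" using inseg[OF st] by simp
      thus False using knot_disjoint[OF K ij] by simp
    qed
  next
    show "(\<exists>s\<in>{0..1}. \<exists>t\<in>{0..1}. cY u u' (A + s *\<^sub>R B - t *\<^sub>R C) = 0 \<and> cZ u u' (A + s *\<^sub>R B - t *\<^sub>R C) = 0) \<longrightarrow> ?b2 * ?c3 - ?b3 * ?c2 \<noteq> 0"
    proof
      assume "\<exists>s\<in>{0..1}. \<exists>t\<in>{0..1}. cY u u' (A + s *\<^sub>R B - t *\<^sub>R C) = 0 \<and> cZ u u' (A + s *\<^sub>R B - t *\<^sub>R C) = 0"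
      then obtain s t where st: "s \<in> {0..1}" "t \<in> {0..1}" "cY u u' (A + s *\<^sub>R B - t *\<^sub>R C) = 0 \<and> cZ u u' (A + s *\<^sub>R B - t *\<^sub>R C) = 0" by blast
      have "\<exists>\<tau>. A + s *\<^sub>R B - t *\<^sub>R C = \<tau> *\<^sub>R u \<and> True" using par_u[OF nz] st(3) by blast
      hence "pseg u v n i \<inter> pseg u v n j \<noteq> {}"
        unfolding pseg_inter_iff[OF gp_nz[OF gu]] using inseg[OF st(1,2)] rr[of s t] by metis
      hence "cross3 B C \<bullet> u \<noteq> 0" using gp_trans[OF gu ij] unfolding B_def C_def by blast
      thus "?b2 * ?c3 - ?b3 * ?c2 \<noteq> 0" unfolding J_u[OF nz] by simp
    qed
  next
    show "(\<exists>s\<in>{0..1}. \<exists>t\<in>{0..1}. cX u u' (A + s *\<^sub>R B - t *\<^sub>R C) = 0 \<and> cZ u u' (A + s *\<^sub>R B - t *\<^sub>R C) = 0) \<longrightarrow> ?b3 * ?c1 - ?b1 * ?c3 \<noteq> 0"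
    proof
      assume "\<exists>s\<in>{0..1}. \<exists>t\<in>{0..1}. cX u u' (A + s *\<^sub>R B - t *\<^sub>R C) = 0 \<and> cZ u u' (A + s *\<^sub>R B - t *\<^sub>R C) = 0"
      then obtain s t where st: "s \<in> {0..1}" "t \<in> {0..1}" "cX u u' (A + s *\<^sub>R B - t *\<^sub>R C) = 0 \<and> cZ u u' (A + s *\<^sub>R B - t *\<^sub>R C) = 0" by blast
      have "\<exists>\<tau>. A + s *\<^sub>R B - t *\<^sub>R C = \<tau> *\<^sub>R u' \<and> True" using par_u'[OF nz] st(3) by blast
      hence "pseg u' v n i \<inter> pseg u' v n j \<noteq> {}"
        unfolding pseg_inter_iff[OF gp_nz[OF gu']] using inseg[OF st(1,2)] rr[of s t] by metis
      hence "cross3 B C \<bullet> u' \<noteq> 0" using gp_trans[OF gu' ij] unfolding B_def C_def by blast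
      thus "?b3 * ?c1 - ?b1 * ?c3 \<noteq> 0" unfolding J_u'[OF nz] by simp
    qed
  next
    show "\<forall>s\<in>{0..1}. \<forall>t\<in>{0..1}. (s = 0 \<or> s = 1 \<or> t = 0 \<or> t = 1) \<longrightarrow>
        \<not> (cY u u' (A + s *\<^sub>R B - t *\<^sub>R C) = 0 \<and> cZ u u' (A + s *\<^sub>R B - t *\<^sub>R C) = 0) \<and>
        \<not> (cX u u' (A + s *\<^sub>R B - t *\<^sub>R C) = 0 \<and> cZ u u' (A + s *\<^sub>R B - t *\<^sub>R C) = 0)"
    proof (intro ballI impI)
      fix s t :: real assume st: "s \<in> {0..1}" "t \<in> {0..1}" and bd: "s = 0 \<or> s = 1 \<or> t = 0 \<or> t = 1"
      define p where "p = v i + s *\<^sub>R edge_dir v n i"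
      define q where "q = v j + t *\<^sub>R edge_dir v n j"
      have r: "A + s *\<^sub>R B - t *\<^sub>R C = p - q" unfolding p_def q_def rr ..
      have pq: "p \<in> seg v n i" "q \<in> seg v n j" unfolding p_def q_def using inseg[OF st] by blast+
      have notpar: "\<not> (\<exists>\<tau>. p - q = \<tau> *\<^sub>R w)" if gw: "general_position v n w" for w
      proof -
        consider "s = 0" | "s = 1" | "t = 0" | "t = 1" using bd by blast
        thus ?thesis
        proof cases
          case 1 hence "p = v i" unfolding p_def by simp
          thus ?thesis using vert_not_par[OF gw ij ij(1)] pq seg_ends[OF ij(1) n0] by blast
        next
          case 2 hence "p = v (Suc i mod n)" unfolding p_def by (simp add: edge_dir_def)
          moreover have "Suc i mod n < n" using n0 by simp
          ultimately show ?thesis using vert_not_par[OF gw ij] pq seg_ends[OF ij(1) n0] by blast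
        next
          case 3 hence "q = v j" unfolding q_def by simp
          hence "\<not> (\<exists>\<tau>. q - p = \<tau> *\<^sub>R w)" using vert_not_par[OF gw ij ij(2)] pq seg_ends[OF ij(2) n0] by blast
          thus ?thesis by (metis minus_diff_eq scaleR_minus_left)
        next
          case 4 hence "q = v (Suc j mod n)" unfolding q_def by (simp add: edge_dir_def)
          moreover have "Suc j mod n < n" using n0 by simp
          ultimately have "\<not> (\<exists>\<tau>. q - p = \<tau> *\<^sub>R w)" using vert_not_par[OF gw ij] pq seg_ends[OF ij(2) n0] by blast
          thus ?thesis by (metis minus_diff_eq scaleR_minus_left)
        qed
      qed
      have "\<not> (cY u u' (p - q) = 0 \<and> cZ u u' (p - q) = 0)"
        using notpar[OF gu] par_u[OF nz, of "p - q" "\<lambda>_. True"] by blast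
      moreover have "\<not> (cX u u' (p - q) = 0 \<and> cZ u u' (p - q) = 0)"
        using notpar[OF gu'] par_u'[OF nz, of "p - q" "\<lambda>_. True"] by blast
      ultimately show "\<not> (cY u u' (A + s *\<^sub>R B - t *\<^sub>R C) = 0 \<and> cZ u u' (A + s *\<^sub>R B - t *\<^sub>R C) = 0) \<and>
        \<not> (cX u u' (A + s *\<^sub>R B - t *\<^sub>R C) = 0 \<and> cZ u u' (A + s *\<^sub>R B - t *\<^sub>R C) = 0)" unfolding r by blast
    qed
  qed
  have C: "PPc ?a1 ?a2 ?a3 ?b1 ?b2 ?b3 ?c1 ?c2 ?c3" using PP_all[OF H] .
  have NX: "Wd v n u i j = (if \<exists>s\<in>{0..1}. \<exists>t\<in>{0..1}. lin ?a2 ?b2 ?c2 s t = 0 \<and> lin ?a3 ?b3 ?c3 s t = 0 \<and> lin ?a1 ?b1 ?c1 s t > 0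
        then sgn (?b2 * ?c3 - ?b3 * ?c2) else 0)"
  proof -
    have e: "(\<exists>\<tau>>0. A + s *\<^sub>R B - t *\<^sub>R C = \<tau> *\<^sub>R u) \<longleftrightarrow>
      cY u u' (A + s *\<^sub>R B - t *\<^sub>R C) = 0 \<and> cZ u u' (A + s *\<^sub>R B - t *\<^sub>R C) = 0 \<and> cX u u' (A + s *\<^sub>R B - t *\<^sub>R C) > 0" for s t
      using par_u[OF nz, of "A + s *\<^sub>R B - t *\<^sub>R C" "\<lambda>\<tau>. \<tau> > 0"] by blast
    have sg: "sgn (cross3 (edge_dir v n i) (edge_dir v n j) \<bullet> u) = sgn (?b2 * ?c3 - ?b3 * ?c2)"
      unfolding B_def[symmetric] C_def[symmetric] J_u[OF nz] using Dp by (simp add: sgn_mult)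
    show ?thesis unfolding Wd_def rr e lin_coords sg ..
  qed
  have NY: "Wd v n u' i j = (if \<exists>s\<in>{0..1}. \<exists>t\<in>{0..1}. lin ?a1 ?b1 ?c1 s t = 0 \<and> lin ?a3 ?b3 ?c3 s t = 0 \<and> lin ?a2 ?b2 ?c2 s t > 0
        then sgn (?b3 * ?c1 - ?b1 * ?c3) else 0)"
  proof -
    have e: "(\<exists>\<tau>>0. A + s *\<^sub>R B - t *\<^sub>R C = \<tau> *\<^sub>R u') \<longleftrightarrow>
      cX u u' (A + s *\<^sub>R B - t *\<^sub>R C) = 0 \<and> cZ u u' (A + s *\<^sub>R B - t *\<^sub>R C) = 0 \<and> cY u u' (A + s *\<^sub>R B - t *\<^sub>R C) > 0" for s t
      using par_u'[OF nz, of "A + s *\<^sub>R B - t *\<^sub>R C" "\<lambda>\<tau>. \<tau> > 0"] by blast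
    have sg: "sgn (cross3 (edge_dir v n i) (edge_dir v n j) \<bullet> u') = sgn (?b3 * ?c1 - ?b1 * ?c3)"
      unfolding B_def[symmetric] C_def[symmetric] J_u'[OF nz] using Dp by (simp add: sgn_mult)
    show ?thesis unfolding Wd_def rr e lin_coords sg ..
  qed
  have cor: "co u u' (A + 0 *\<^sub>R B - 0 *\<^sub>R C) = co u u' (v i - v j)"
    "co u u' (A + 1 *\<^sub>R B - 0 *\<^sub>R C) = co u u' (v (Suc i mod n) - v j)"
    "co u u' (A + 1 *\<^sub>R B - 1 *\<^sub>R C) = co u u' (v (Suc i mod n) - v (Suc j mod n))"
    "co u u' (A + 0 *\<^sub>R B - 1 *\<^sub>R C) = co u u' (v i - v (Suc j mod n))"
    unfolding A_def B_def C_def edge_dir_def by (simp_all add: algebra_simps)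
  have C': "Tf (co u u' (A + 0 *\<^sub>R B - 0 *\<^sub>R C)) (co u u' (A + 1 *\<^sub>R B - 0 *\<^sub>R C))
    + Tf (co u u' (A + 1 *\<^sub>R B - 0 *\<^sub>R C)) (co u u' (A + 1 *\<^sub>R B - 1 *\<^sub>R C))
    + Tf (co u u' (A + 1 *\<^sub>R B - 1 *\<^sub>R C)) (co u u' (A + 0 *\<^sub>R B - 1 *\<^sub>R C))
    + Tf (co u u' (A + 0 *\<^sub>R B - 1 *\<^sub>R C)) (co u u' (A + 0 *\<^sub>R B - 0 *\<^sub>R C))
    = Wd v n u' i j - Wd v n u i j"
    unfolding NX NY co_def lin_coords[symmetric] using C unfolding PPc_def .
  show ?thesis using C' unfolding cor Ge_def He_def
    using Tf_anti[of "co u u' (v (Suc i mod n) - v (Suc j mod n))" "co u u' (v i - v (Suc j mod n))"]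
      Tf_anti[of "co u u' (v i - v (Suc j mod n))" "co u u' (v i - v j)"] by linarith
qed


lemma Tf_bound: "\<bar>Tf a b\<bar> \<le> 1"
  by (cases a; cases b) (auto simp: Tf_def om_def)

lemma comb_formula:
  fixes a3 b3 x y :: real
  assumes "a3 - b3 \<noteq> 0"
  shows "(1 - a3/(a3-b3))*x + (a3/(a3-b3))*y = (b3*x - a3*y)/(b3 - a3)"
proof -
  have "1 - a3/(a3-b3) = -b3/(a3-b3)" using assms by (simp add: field_simps)
  hence "(1 - a3/(a3-b3))*x + (a3/(a3-b3))*y = (-b3*x)/(a3-b3) + (a3*y)/(a3-b3)" by simp
  also have "\<dots> = (a3*y - b3*x)/(a3-b3)" by (simp add: diff_divide_distrib)
  also have "\<dots> = (b3*x - a3*y)/(b3 - a3)" by (metis minus_diff_eq minus_divide_divide)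
  finally show ?thesis .
qed

lemma Tf_neg_bound:
  fixes a1 a2 a3 b1 b2 b3 :: real
  assumes nz: "\<forall>l\<in>{0..1}. \<not> ((1-l)*a1 + l*b1 = 0 \<and> (1-l)*a2 + l*b2 = 0 \<and> (1-l)*a3 + l*b3 = 0)"
  shows "\<bar>Tf (a1,a2,a3) (b1,b2,b3) - Tf (-a1,-a2,-a3) (-b1,-b2,-b3)\<bar> \<le> 1"
proof -
  consider (z) "(b3 \<ge> 0) = (a3 \<ge> 0)" | (z2) "(-b3 \<ge> 0) = (-a3 \<ge> 0)" | (main) "a3*b3 < 0"
    by (cases "a3 > 0"; cases "b3 > 0"; cases "a3 = 0"; cases "b3 = 0")
       (auto simp: mult_less_0_iff)
  then show ?thesis
  proof cases
    case z
    hence "Tf (a1,a2,a3) (b1,b2,b3) = 0" by (simp add: Tf_def)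
    thus ?thesis using Tf_bound[of "(-a1,-a2,-a3)" "(-b1,-b2,-b3)"] by simp
  next
    case z2
    hence "Tf (-a1,-a2,-a3) (-b1,-b2,-b3) = 0" by (simp add: Tf_def)
    thus ?thesis using Tf_bound[of "(a1,a2,a3)" "(b1,b2,b3)"] by simp
  next
    case main
    have ne: "a3 - b3 \<noteq> 0" "b3 - a3 \<noteq> 0" using main by auto
    define l where "l = a3/(a3 - b3)"
    have l01: "l \<in> {0..1}" unfolding l_def using main
      by (cases "a3 > 0") (auto simp: mult_less_0_iff divide_simps)
    define qx where "qx = (b3*a1 - a3*b1)/(b3 - a3)"
    define qy where "qy = (b3*a2 - a3*b2)/(b3 - a3)"
    have lx: "(1-l)*a1 + l*b1 = qx" unfolding l_def qx_def using comb_formula[OF ne(1)] .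
    have ly: "(1-l)*a2 + l*b2 = qy" unfolding l_def qy_def using comb_formula[OF ne(1)] .
    have lz: "(1-l)*a3 + l*b3 = 0" unfolding l_def using comb_formula[OF ne(1), of a3 b3] by simp
    have nq: "\<not> (qx = 0 \<and> qy = 0)" using nz l01 lx ly lz by auto
    have mx: "((-b3)*(-a1) - (-a3)*(-b1))/((-b3) - (-a3)) = - qx" unfolding qx_def using ne
      by (simp add: field_simps)
    have my: "((-b3)*(-a2) - (-a3)*(-b2))/((-b3) - (-a3)) = - qy" unfolding qy_def using ne
      by (simp add: field_simps)
    have T1: "Tf (a1,a2,a3) (b1,b2,b3) = (if b3 \<ge> 0 then 1 else -1) * om qx qy"
      using main unfolding Tf_def qx_def qy_def by (auto simp: mult_less_0_iff)
    have T2: "Tf (-a1,-a2,-a3) (-b1,-b2,-b3) = (if b3 \<ge> 0 then -1 else 1) * om (-qx) (-qy)"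
      using main unfolding Tf_def mx[symmetric] my[symmetric] by (auto simp: mult_less_0_iff)
    have "\<not> (om qx qy = 1 \<and> om (-qx) (-qy) = 1)" using nq by (auto simp: om_def)
    moreover have "om qx qy = 0 \<or> om qx qy = 1" "om (-qx) (-qy) = 0 \<or> om (-qx) (-qy) = 1"
      by (auto simp: om_def)
    ultimately show ?thesis unfolding T1 T2 by auto
  qed
qed


definition sc :: "nat \<Rightarrow> nat \<Rightarrow> nat" where "sc n j = Suc j mod n"
definition pr :: "nat \<Rightarrow> nat \<Rightarrow> nat" where "pr n j = (if j = 0 then n - 1 else j - 1)"

lemma sc_eq: assumes "j < n" shows "sc n j = (if Suc j = n then 0 else Suc j)"
proof (cases "Suc j < n")
  case True thus ?thesis unfolding sc_def by simp
next
  case False hence "Suc j = n" using assms by simp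
  thus ?thesis unfolding sc_def by simp
qed

lemma sc_lt: "0 < n \<Longrightarrow> sc n j < n" unfolding sc_def by simp
lemma pr_lt: "j < n \<Longrightarrow> pr n j < n" unfolding pr_def by auto
lemma sc_pr: "j < n \<Longrightarrow> sc n (pr n j) = j"
  using pr_lt[of j n] by (auto simp: sc_eq pr_def)
lemma pr_sc: "j < n \<Longrightarrow> pr n (sc n j) = j"
  by (auto simp: sc_eq pr_def)

lemma adj_iff: "i < n \<Longrightarrow> j < n \<Longrightarrow> adjacent n i j \<longleftrightarrow> j = sc n i \<or> j = pr n i"
  unfolding adjacent_def sc_def[symmetric] using sc_pr pr_sc by metis

lemma sc_distinct: assumes "3 \<le> n" "i < n"
  shows "sc n i \<noteq> i" "pr n i \<noteq> i" "sc n i \<noteq> pr n i" "sc n (sc n i) \<noteq> i" "sc n (sc n i) \<noteq> sc n i"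
  using assms by (auto simp: sc_eq pr_def split: if_splits)

lemma inj_sc: "inj_on (sc n) {..<n}"
  by (rule inj_onI) (metis lessThan_iff pr_sc)

lemma sc_image: "0 < n \<Longrightarrow> sc n ` {..<n} = {..<n}"
proof
  assume "0 < n" thus "sc n ` {..<n} \<subseteq> {..<n}" using sc_lt by auto
next
  show "{..<n} \<subseteq> sc n ` {..<n}"
  proof
    fix j assume "j \<in> {..<n}"
    hence "j = sc n (pr n j)" "pr n j \<in> {..<n}" using sc_pr pr_lt by auto
    thus "j \<in> sc n ` {..<n}" by blast
  qed
qed

lemma J_eq: assumes "3 \<le> n" "i < n"
  shows "{j. j < n \<and> j \<noteq> i \<and> \<not> adjacent n i j} = {..<n} - {i, sc n i, pr n i}"
  using adj_iff[OF assms(2)] by auto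

lemma sum3: fixes g :: "nat \<Rightarrow> real"
  assumes "a \<noteq> b" "a \<noteq> c" "b \<noteq> c" shows "sum g {a, b, c} = g a + g b + g c"
  using assms by simp

lemma tele:
  fixes g :: "nat \<Rightarrow> real"
  assumes n3: "3 \<le> n" and i: "i < n"
  shows "(\<Sum>j\<in>{j. j < n \<and> j \<noteq> i \<and> \<not> adjacent n i j}. g j - g (Suc j mod n)) = g (sc n (sc n i)) - g (pr n i)"
proof -
  have n0: "0 < n" using n3 by simp
  define J where "J = {..<n} - {i, sc n i, pr n i}"
  have S: "{i, sc n i, pr n i} \<subseteq> {..<n}" using i sc_lt[OF n0] pr_lt[OF i] by auto
  have d: "sc n i \<noteq> i" "pr n i \<noteq> i" "sc n i \<noteq> pr n i" "sc n (sc n i) \<noteq> i" "sc n (sc n i) \<noteq> sc n i"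
    using sc_distinct[OF assms] by auto
  have s1: "sum g J = sum g {..<n} - (g i + g (sc n i) + g (pr n i))"
    unfolding J_def using sum_diff[OF _ S, of g] sum3[of i "sc n i" "pr n i" g] d by simp
  have scJ: "sc n ` J = {..<n} - {sc n i, sc n (sc n i), i}"
  proof -
    have "sc n ` J = sc n ` {..<n} - sc n ` {i, sc n i, pr n i}"
      unfolding J_def by (rule inj_on_image_set_diff[OF inj_sc]) (use S in auto)
    also have "\<dots> = {..<n} - {sc n i, sc n (sc n i), i}" using sc_image[OF n0] sc_pr[OF i] by simp
    finally show ?thesis .
  qed
  have S2: "{sc n i, sc n (sc n i), i} \<subseteq> {..<n}" using i sc_lt[OF n0] by auto
  have s2: "(\<Sum>j\<in>J. g (sc n j)) = sum g {..<n} - (g (sc n i) + g (sc n (sc n i)) + g i)"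
  proof -
    have inj: "inj_on (sc n) J" by (rule inj_on_subset[OF inj_sc]) (auto simp: J_def)
    have "(\<Sum>j\<in>J. g (sc n j)) = sum g (sc n ` J)"
      using sum.reindex[OF inj, of g] by (simp add: comp_def)
    also have "\<dots> = sum g {..<n} - (g (sc n i) + g (sc n (sc n i)) + g i)"
      unfolding scJ using sum_diff[OF _ S2, of g] sum3[of "sc n i" "sc n (sc n i)" i g] d by simp
    finally show ?thesis .
  qed
  have "(\<Sum>j\<in>{j. j < n \<and> j \<noteq> i \<and> \<not> adjacent n i j}. g j - g (Suc j mod n)) = (\<Sum>j\<in>J. g j - g (sc n j))"
    unfolding J_eq[OF assms] J_def sc_def ..
  also have "\<dots> = sum g J - (\<Sum>j\<in>J. g (sc n j))" by (rule sum_subtractf)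
  also have "\<dots> = g (sc n (sc n i)) - g (pr n i)" unfolding s1 s2 by simp
  finally show ?thesis .
qed


lemma knot_n3: "polygonal_knot v n \<Longrightarrow> 3 \<le> n" unfolding polygonal_knot_def by blast

lemma knot_adj: "polygonal_knot v n \<Longrightarrow> i < n \<Longrightarrow> seg v n i \<inter> seg v n (Suc i mod n) = {v (Suc i mod n)}"
proof -
  assume K: "polygonal_knot v n" and i: "i < n"
  have "n > 0" using i by simp
  hence "Suc i mod n < n" by simp
  thus ?thesis using K i unfolding polygonal_knot_def by blast
qed

lemma knot_vne: "polygonal_knot v n \<Longrightarrow> i < n \<Longrightarrow> v i \<noteq> v (Suc i mod n)"
  unfolding polygonal_knot_def by blast

lemma v_sc2_notin: assumes K: "polygonal_knot v n" and i: "i < n"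
  shows "v (sc n (sc n i)) \<notin> seg v n i"
proof
  assume a: "v (sc n (sc n i)) \<in> seg v n i"
  have n0: "0 < n" using i by simp
  have j: "sc n i < n" using sc_lt[OF n0] .
  have "v (sc n (sc n i)) \<in> seg v n (sc n i)" using seg_ends(2)[OF j n0] unfolding sc_def .
  hence "v (sc n (sc n i)) \<in> seg v n i \<inter> seg v n (sc n i)" using a by blast
  hence "v (sc n (sc n i)) = v (sc n i)" using knot_adj[OF K i] unfolding sc_def by blast
  thus False using knot_vne[OF K j] unfolding sc_def by simp
qed

lemma v_pr_notin: assumes K: "polygonal_knot v n" and i: "i < n"
  shows "v (pr n i) \<notin> seg v n i"
proof
  assume a: "v (pr n i) \<in> seg v n i"
  have n0: "0 < n" using i by simp
  have j: "pr n i < n" using pr_lt[OF i] .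
  have e: "Suc (pr n i) mod n = i" using sc_pr[OF i] unfolding sc_def .
  have "v (pr n i) \<in> seg v n (pr n i)" using seg_ends(1)[OF j n0] .
  hence "v (pr n i) \<in> seg v n (pr n i) \<inter> seg v n i" using a by blast
  hence "v (pr n i) = v i" using knot_adj[OF K j] unfolding e by blast
  thus False using knot_vne[OF K j] unfolding e by simp
qed

lemma GH_bound:
  assumes nz: "cross3 u u' \<noteq> 0" and nk: "v k \<notin> seg v n i"
  shows "\<bar>Ge u u' v n i k - He u u' v n i k\<bar> \<le> 1"
proof -
  define a where "a = v i - v k"
  define b where "b = v (Suc i mod n) - v k"
  have He: "He u u' v n i k = Tf (- cX u u' a, - cY u u' a, - cZ u u' a) (- cX u u' b, - cY u u' b, - cZ u u' b)"
  proof -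
    have "v k - v i = - a" "v k - v (Suc i mod n) = - b" unfolding a_def b_def by simp_all
    thus ?thesis unfolding He_def co_def by (simp add: cX_lin cY_lin cZ_lin)
  qed
  have Ge: "Ge u u' v n i k = Tf (cX u u' a, cY u u' a, cZ u u' a) (cX u u' b, cY u u' b, cZ u u' b)"
    unfolding Ge_def co_def a_def b_def ..
  have nzl: "\<forall>l\<in>{0..1}. \<not> ((1-l)*cX u u' a + l*cX u u' b = 0 \<and> (1-l)*cY u u' a + l*cY u u' b = 0 \<and> (1-l)*cZ u u' a + l*cZ u u' b = 0)"
  proof (intro ballI notI)
    fix l :: real assume l: "l \<in> {0..1}"
      and z: "(1-l)*cX u u' a + l*cX u u' b = 0 \<and> (1-l)*cY u u' a + l*cY u u' b = 0 \<and> (1-l)*cZ u u' a + l*cZ u u' b = 0"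
    have e: "(1-l) *\<^sub>R a + l *\<^sub>R b = (v i + l *\<^sub>R edge_dir v n i) - v k"
      unfolding a_def b_def edge_dir_def by (simp add: algebra_simps)
    have "cX u u' ((1-l) *\<^sub>R a + l *\<^sub>R b) = 0" "cY u u' ((1-l) *\<^sub>R a + l *\<^sub>R b) = 0" "cZ u u' ((1-l) *\<^sub>R a + l *\<^sub>R b) = 0"
      using z by (simp_all add: cX_lin cY_lin cZ_lin)
    hence "(1-l) *\<^sub>R a + l *\<^sub>R b = 0" using zero_coords[OF nz] by blast
    hence "v k = v i + l *\<^sub>R edge_dir v n i" unfolding e by simp
    hence "v k \<in> seg v n i" unfolding seg_param using l by blast
    thus False using nk by blast
  qed
  show ?thesis unfolding He Ge by (rule Tf_neg_bound[OF nzl])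
qed

lemma diff_bound:
  assumes K: "polygonal_knot v n" and gu: "general_position v n u" and gu': "general_position v n u'"
    and nz: "cross3 u u' \<noteq> 0"
  shows "\<bar>writhe v n u' - writhe v n u\<bar> \<le> 2 * real n"
proof -
  have n3: "3 \<le> n" using knot_n3[OF K] .
  define J where "J i = {j. j < n \<and> j \<noteq> i \<and> \<not> adjacent n i j}" for i
  have finJ: "finite (J i)" for i unfolding J_def by simp
  have "writhe v n u' - writhe v n u = (\<Sum>i<n. \<Sum>j\<in>J i. Wd v n u' i j - Wd v n u i j)"
    unfolding writhe_ordered[OF K gu] writhe_ordered[OF K gu'] J_def
    by (simp add: sum_subtractf)
  also have "\<dots> = (\<Sum>i<n. \<Sum>j\<in>J i. (Ge u u' v n i j - Ge u u' v n i (Suc j mod n)) + (He u u' v n j (Suc i mod n) - He u u' v n j i))"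
  proof (rule sum.cong[OF refl], rule sum.cong[OF refl])
    fix i j assume "i \<in> {..<n}" "j \<in> J i"
    hence ij: "i < n" "j < n" "i \<noteq> j" "\<not> adjacent n i j" unfolding J_def by auto
    show "Wd v n u' i j - Wd v n u i j = (Ge u u' v n i j - Ge u u' v n i (Suc j mod n)) + (He u u' v n j (Suc i mod n) - He u u' v n j i)"
      using pair_SS[OF K gu gu' nz ij] by simp
  qed
  also have "\<dots> = (\<Sum>i<n. \<Sum>j\<in>J i. Ge u u' v n i j - Ge u u' v n i (Suc j mod n)) + (\<Sum>i<n. \<Sum>j\<in>J i. He u u' v n j (Suc i mod n) - He u u' v n j i)"
    by (simp add: sum.distrib)
  also have "(\<Sum>i<n. \<Sum>j\<in>J i. Ge u u' v n i j - Ge u u' v n i (Suc j mod n)) = (\<Sum>i<n. Ge u u' v n i (sc n (sc n i)) - Ge u u' v n i (pr n i))"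
    by (rule sum.cong[OF refl]) (simp add: J_def tele[OF n3])
  also have "(\<Sum>i<n. \<Sum>j\<in>J i. He u u' v n j (Suc i mod n) - He u u' v n j i) = (\<Sum>j<n. \<Sum>i\<in>J j. He u u' v n j (Suc i mod n) - He u u' v n j i)"
  proof -
    have Jr: "J i = {j \<in> {..<n}. j \<noteq> i \<and> \<not> adjacent n i j}" for i unfolding J_def by auto
    have Jr': "{i \<in> {..<n}. j \<noteq> i \<and> \<not> adjacent n i j} = J j" for j unfolding J_def using adjacent_sym by auto
    show ?thesis unfolding Jr
      using sum.swap_restrict[of "{..<n}" "{..<n}" "\<lambda>i j. He u u' v n j (Suc i mod n) - He u u' v n j i" "\<lambda>i j. j \<noteq> i \<and> \<not> adjacent n i j"]
      unfolding Jr' Jr by simp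
  qed
  also have "\<dots> = (\<Sum>j<n. - (He u u' v n j (sc n (sc n j)) - He u u' v n j (pr n j)))"
  proof (rule sum.cong[OF refl])
    fix j assume j: "j \<in> {..<n}"
    have "(\<Sum>i\<in>J j. He u u' v n j (Suc i mod n) - He u u' v n j i) = - (\<Sum>i\<in>J j. He u u' v n j i - He u u' v n j (Suc i mod n))"
      by (simp add: sum_negf[symmetric])
    also have "\<dots> = - (He u u' v n j (sc n (sc n j)) - He u u' v n j (pr n j))"
      using j unfolding J_def by (simp add: tele[OF n3])
    finally show "(\<Sum>i\<in>J j. He u u' v n j (Suc i mod n) - He u u' v n j i) = - (He u u' v n j (sc n (sc n j)) - He u u' v n j (pr n j))" .
  qed
  finally have eq: "writhe v n u' - writhe v n u = (\<Sum>i<n. (Ge u u' v n i (sc n (sc n i)) - He u u' v n i (sc n (sc n i))) - (Ge u u' v n i (pr n i) - He u u' v n i (pr n i)))"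
    by (simp add: sum.distrib[symmetric] sum_subtractf[symmetric] algebra_simps)
  have bnd: "\<bar>(Ge u u' v n i (sc n (sc n i)) - He u u' v n i (sc n (sc n i))) - (Ge u u' v n i (pr n i) - He u u' v n i (pr n i))\<bar> \<le> 2"
    if "i \<in> {..<n}" for i
  proof -
    have i: "i < n" using that by simp
    have "\<bar>Ge u u' v n i (sc n (sc n i)) - He u u' v n i (sc n (sc n i))\<bar> \<le> 1"
      by (rule GH_bound[OF nz v_sc2_notin[OF K i]])
    moreover have "\<bar>Ge u u' v n i (pr n i) - He u u' v n i (pr n i)\<bar> \<le> 1"
      by (rule GH_bound[OF nz v_pr_notin[OF K i]])
    ultimately show ?thesis by linarith
  qed
  have "\<bar>writhe v n u' - writhe v n u\<bar> \<le> (\<Sum>i<n. \<bar>(Ge u u' v n i (sc n (sc n i)) - He u u' v n i (sc n (sc n i))) - (Ge u u' v n i (pr n i) - He u u' v n i (pr n i))\<bar>)"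
    unfolding eq by (rule sum_abs)
  also have "\<dots> \<le> (\<Sum>i<n. 2)" by (rule sum_mono) (rule bnd)
  also have "\<dots> = 2 * real n" by simp
  finally show ?thesis .
qed


lemma writhe_le_card: "\<bar>writhe v n w\<bar> \<le> real (card (crossings v n w))"
proof -
  have "\<bar>writhe v n w\<bar> \<le> (\<Sum>x\<in>crossings v n w. \<bar>crossing_sign v n w (fst x) (snd x)\<bar>)"
    unfolding writhe_def by (simp add: case_prod_beta sum_abs)
  also have "\<dots> \<le> (\<Sum>x\<in>crossings v n w. 1)"
    by (rule sum_mono) (simp add: crossing_sign_def abs_sgn_eq)
  also have "\<dots> = real (card (crossings v n w))" by simp
  finally show ?thesis .
qed

lemma proj_scale: assumes "k \<noteq> 0" shows "proj (k *\<^sub>R u) x = proj u x"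
proof -
  have "(x \<bullet> (k *\<^sub>R u)) / ((k *\<^sub>R u) \<bullet> (k *\<^sub>R u)) * k = (x \<bullet> u) / (u \<bullet> u)"
    using assms by (simp add: field_simps)
  thus ?thesis unfolding proj_def by (metis scaleR_scaleR)
qed

lemma crossings_par:
  assumes "cross3 u u' = 0" "u \<noteq> 0" "u' \<noteq> 0"
  shows "crossings v n u' = crossings v n u"
proof -
  have "collinear {0, u, u'}" using assms(1) cross_eq_0 by blast
  then obtain k where k: "u' = k *\<^sub>R u" using assms(2,3) collinear_lemma by blast
  hence "k \<noteq> 0" using assms(3) by auto
  hence "proj u' = proj u" unfolding k by (intro ext) (rule proj_scale)
  thus ?thesis unfolding crossings_def pseg_def by simp
qed

theorem theorem3p3:
  fixes v :: "nat \<Rightarrow> real^3" and n :: nat and u u' :: "real^3"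
  assumes "polygonal_knot v n"
    and "general_position v n u"
    and "general_position v n u'"
  shows "real (card (crossings v n u')) \<ge> (\<bar>writhe v n u\<bar> - 3 * real n) / 16"
proof -
  have main: "\<bar>writhe v n u\<bar> \<le> real (card (crossings v n u')) + 2 * real n"
  proof (cases "cross3 u u' = 0")
    case True
    have "crossings v n u' = crossings v n u"
      using crossings_par[OF True gp_nz[OF assms(2)] gp_nz[OF assms(3)]] .
    thus ?thesis using writhe_le_card[of v n u] by simp
  next
    case False
    have "\<bar>writhe v n u' - writhe v n u\<bar> \<le> 2 * real n" using diff_bound[OF assms False] .
    moreover have "\<bar>writhe v n u'\<bar> \<le> real (card (crossings v n u'))" by (rule writhe_le_card)
    ultimately show ?thesis by linarith
  qed
  have c0: "real (card (crossings v n u')) \<ge> 0" by simp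
  have "\<bar>writhe v n u\<bar> - 3 * real n \<le> 16 * real (card (crossings v n u'))"
  proof (cases "\<bar>writhe v n u\<bar> \<le> 3 * real n")
    case True thus ?thesis using c0 by linarith
  next
    case False thus ?thesis using main by linarith
  qed
  thus ?thesis by (simp add: divide_le_eq)
qed

end
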